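(* Every $h$-perfect graph is $\hbar$-perfect. In particular, every perfect graph is $\hbar$-perfect.
   Context: A graph $G$ on $\{1,\dots,n\}$ is $h$-perfect if its stable set polytope $\operatorname{STAB}(G)$ (convex hull of incidence vectors of independent sets) equals the set of $x\in\mathbb{R}^n$ satisfying: $x_i\ge0$ for all $i$; $\sum_{i\in K}x_i\le1$ for every clique $K$ of $G$; and $\sum_{i\in C}x_i\le a$ for every odd cycle $C$ of $G$ with $2a+1$ vertices. Perfect graphs (those for which chromatic number equals clique number in every induced subgraph) are $h$-perfect. A realization of $G$ is a tuple $(S_1,\dots,S_n)$ of Pauli strings (tensor products of matrices from $\{I,X,Y,Z\}$) of common length with $S_i,S_j$ anticommuting iff $i\sim j$ and commuting otherwise; every graph has one. For $w\in\mathbb{R}^n_{\ge0}$, $\beta(G,w)=\sup_\rho\sum_iw_i\operatorname{tr}(\rho S_i)^2$ over density matrices (independent of realization), $\alpha(G,w)=\max\{\sum_{i\in I}w_i:I\text{ independent}\}$, and $G$ is $\hbar$-perfect if $\beta(G,w)=\alpha(G,w)$ for all $w\ge0$. *)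

theory Defs
  imports "HOL-Analysis.Analysis"
begin

text \<open>A (simple) graph on a finite vertex type 'a is given by an adjacency
  relation E (assumed symmetric and irreflexive in the theorem).\<close>

definition independent_set :: "('a \<Rightarrow> 'a \<Rightarrow> bool) \<Rightarrow> 'a set \<Rightarrow> bool" where
  "independent_set E I \<longleftrightarrow> (\<forall>u\<in>I. \<forall>v\<in>I. \<not> E u v)"

definition clique :: "('a \<Rightarrow> 'a \<Rightarrow> bool) \<Rightarrow> 'a set \<Rightarrow> bool" where
  "clique E K \<longleftrightarrow> (\<forall>u\<in>K. \<forall>v\<in>K. u \<noteq> v \<longrightarrow> E u v)"

text \<open>C is (the vertex set of) an odd cycle of G with 2a+1 vertices
  (a cycle subgraph, not necessarily induced).\<close>
definition odd_cycle :: "('a \<Rightarrow> 'a \<Rightarrow> bool) \<Rightarrow> 'a set \<Rightarrow> nat \<Rightarrow> bool" where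
  "odd_cycle E C a \<longleftrightarrow> 1 \<le> a \<and> (\<exists>vs. distinct vs \<and> length vs = 2 * a + 1 \<and> set vs = C \<and>
      (\<forall>i < length vs. E (vs ! i) (vs ! ((i + 1) mod length vs))))"

definition indep_vec :: "'a::finite set \<Rightarrow> real ^ 'a" where
  "indep_vec I = (\<chi> v. if v \<in> I then 1 else 0)"

definition STAB :: "('a::finite \<Rightarrow> 'a \<Rightarrow> bool) \<Rightarrow> (real ^ 'a) set" where
  "STAB E = convex hull {indep_vec I | I. independent_set E I}"

definition h_perfect :: "('a::finite \<Rightarrow> 'a \<Rightarrow> bool) \<Rightarrow> bool" where
  "h_perfect E \<longleftrightarrow> STAB E =
     {x. (\<forall>i. 0 \<le> x $ i)
       \<and> (\<forall>K. clique E K \<longrightarrow> (\<Sum>i\<in>K. x $ i) \<le> 1)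
       \<and> (\<forall>C a. odd_cycle E C a \<longrightarrow> (\<Sum>i\<in>C. x $ i) \<le> real a)}"

definition alpha :: "('a::finite \<Rightarrow> 'a \<Rightarrow> bool) \<Rightarrow> ('a \<Rightarrow> real) \<Rightarrow> real" where
  "alpha E w = Max {(\<Sum>i\<in>I. w i) | I. independent_set E I}"

text \<open>Square complex matrices of dimension d are functions nat => nat => complex,
  of which only the entries with indices < d matter.\<close>

datatype pauli = PI | PX | PY | PZ

fun pauli_entry :: "pauli \<Rightarrow> nat \<Rightarrow> nat \<Rightarrow> complex" where
  "pauli_entry PI r c = (if r = c then 1 else 0)"
| "pauli_entry PX r c = (if r \<noteq> c then 1 else 0)"
| "pauli_entry PY r c = (if r = 0 \<and> c = 1 then - \<i> else if r = 1 \<and> c = 0 then \<i> else 0)"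
| "pauli_entry PZ r c = (if r = c then (if r = 0 then 1 else -1) else 0)"

text \<open>Tensor product of the Pauli matrices in a string p, a 2^(length p)
  square matrix; the k-th tensor factor acts on bit k of the index.\<close>
definition pauli_mat :: "pauli list \<Rightarrow> nat \<Rightarrow> nat \<Rightarrow> complex" where
  "pauli_mat p r c = (\<Prod>k<length p. pauli_entry (p ! k) ((r div 2 ^ k) mod 2) ((c div 2 ^ k) mod 2))"

definition mat_mult :: "nat \<Rightarrow> (nat \<Rightarrow> nat \<Rightarrow> complex) \<Rightarrow> (nat \<Rightarrow> nat \<Rightarrow> complex) \<Rightarrow> nat \<Rightarrow> nat \<Rightarrow> complex" where
  "mat_mult d A B i j = (\<Sum>k<d. A i k * B k j)"

definition mtrace :: "nat \<Rightarrow> (nat \<Rightarrow> nat \<Rightarrow> complex) \<Rightarrow> complex" where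
  "mtrace d A = (\<Sum>i<d. A i i)"

definition mats_commute :: "nat \<Rightarrow> (nat \<Rightarrow> nat \<Rightarrow> complex) \<Rightarrow> (nat \<Rightarrow> nat \<Rightarrow> complex) \<Rightarrow> bool" where
  "mats_commute d A B \<longleftrightarrow> (\<forall>i<d. \<forall>j<d. mat_mult d A B i j = mat_mult d B A i j)"

definition mats_anticommute :: "nat \<Rightarrow> (nat \<Rightarrow> nat \<Rightarrow> complex) \<Rightarrow> (nat \<Rightarrow> nat \<Rightarrow> complex) \<Rightarrow> bool" where
  "mats_anticommute d A B \<longleftrightarrow> (\<forall>i<d. \<forall>j<d. mat_mult d A B i j = - mat_mult d B A i j)"

definition density_matrix :: "nat \<Rightarrow> (nat \<Rightarrow> nat \<Rightarrow> complex) \<Rightarrow> bool" where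
  "density_matrix d \<rho> \<longleftrightarrow>
     (\<forall>i<d. \<forall>j<d. \<rho> i j = cnj (\<rho> j i))
     \<and> (\<forall>v :: nat \<Rightarrow> complex. 0 \<le> Re (\<Sum>i<d. \<Sum>j<d. cnj (v i) * \<rho> i j * v j))
     \<and> mtrace d \<rho> = 1"

definition realization :: "('a \<Rightarrow> 'a \<Rightarrow> bool) \<Rightarrow> nat \<Rightarrow> ('a \<Rightarrow> pauli list) \<Rightarrow> bool" where
  "realization E m S \<longleftrightarrow> (\<forall>v. length (S v) = m) \<and>
     (\<forall>u v. u \<noteq> v \<longrightarrow>
        (E u v \<longrightarrow> mats_anticommute (2 ^ m) (pauli_mat (S u)) (pauli_mat (S v))) \<and>
        (\<not> E u v \<longrightarrow> mats_commute (2 ^ m) (pauli_mat (S u)) (pauli_mat (S v))))"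

text \<open>beta(G,w), computed with respect to a (chosen) realization; the value
  tr(rho S_i) is real, so we take its real part.\<close>
definition beta :: "('a::finite \<Rightarrow> 'a \<Rightarrow> bool) \<Rightarrow> ('a \<Rightarrow> real) \<Rightarrow> real" where
  "beta E w = (case (SOME mS. realization E (fst mS) (snd mS)) of (m, S) \<Rightarrow>
     (SUP \<rho> \<in> {\<rho>. density_matrix (2 ^ m) \<rho>}.
        (\<Sum>i\<in>UNIV. w i * (Re (mtrace (2 ^ m) (mat_mult (2 ^ m) \<rho> (pauli_mat (S i))))) ^ 2)))"

definition hbar_perfect :: "('a::finite \<Rightarrow> 'a \<Rightarrow> bool) \<Rightarrow> bool" where
  "hbar_perfect E \<longleftrightarrow> (\<forall>w. (\<forall>i. 0 \<le> w i) \<longrightarrow> beta E w = alpha E w)"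

end

theory Submission
  imports Defs
begin

typedef fm = "{X :: nat \<Rightarrow> nat \<Rightarrow> complex. \<exists>N. \<forall>i j. N \<le> i \<or> N \<le> j \<longrightarrow> X i j = 0}"
  morphisms ent Fm
  by (rule exI[of _ "\<lambda>i j. 0"]) auto

setup_lifting type_definition_fm

definition bnd :: "fm \<Rightarrow> nat" where
  "bnd X = (SOME N. \<forall>i j. N \<le> i \<or> N \<le> j \<longrightarrow> ent X i j = 0)"

lemma bnd: "bnd X \<le> i \<or> bnd X \<le> j \<Longrightarrow> ent X i j = 0"
proof -
  have "\<exists>N. \<forall>i j. N \<le> i \<or> N \<le> j \<longrightarrow> ent X i j = 0" using ent[of X] by auto
  then have "\<forall>i j. bnd X \<le> i \<or> bnd X \<le> j \<longrightarrow> ent X i j = 0"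
    unfolding bnd_def by (rule someI_ex)
  then show "bnd X \<le> i \<or> bnd X \<le> j \<Longrightarrow> ent X i j = 0" by blast
qed

lemma bnd_i: "bnd X \<le> i \<Longrightarrow> ent X i j = 0" using bnd by blast
lemma bnd_j: "bnd X \<le> j \<Longrightarrow> ent X i j = 0" using bnd by blast

lemma ent_inject': "(\<And>i j. ent X i j = ent Y i j) \<Longrightarrow> X = Y"
  using ent_inject by (metis ext)

lemma Fm_inverse': "\<forall>i j. N \<le> i \<or> N \<le> j \<longrightarrow> X i j = 0 \<Longrightarrow> ent (Fm X) = X"
  by (rule Fm_inverse) auto

definition fmul_raw :: "fm \<Rightarrow> fm \<Rightarrow> nat \<Rightarrow> nat \<Rightarrow> complex" where
  "fmul_raw X Y i j = (\<Sum>k<bnd X. ent X i k * ent Y k j)"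

lemma fmul_raw_any: "bnd X \<le> N \<Longrightarrow> fmul_raw X Y i j = (\<Sum>k<N. ent X i k * ent Y k j)"
  unfolding fmul_raw_def
  by (rule sum.mono_neutral_left) (auto simp: bnd_j)

lemma fmul_raw_supp: "\<forall>i j. max (bnd X) (bnd Y) \<le> i \<or> max (bnd X) (bnd Y) \<le> j \<longrightarrow> fmul_raw X Y i j = 0"
  unfolding fmul_raw_def by (auto simp: bnd_i bnd_j)

instantiation fm :: real_algebra
begin

lift_definition zero_fm :: fm is "\<lambda>i j. 0" by auto
lift_definition plus_fm :: "fm \<Rightarrow> fm \<Rightarrow> fm" is "\<lambda>X Y i j. X i j + Y i j"
proof -
  fix X Y :: "nat \<Rightarrow> nat \<Rightarrow> complex"
  assume "\<exists>N. \<forall>i j. N \<le> i \<or> N \<le> j \<longrightarrow> X i j = 0" "\<exists>N. \<forall>i j. N \<le> i \<or> N \<le> j \<longrightarrow> Y i j = 0"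
  then obtain N1 N2 where "\<forall>i j. N1 \<le> i \<or> N1 \<le> j \<longrightarrow> X i j = 0" "\<forall>i j. N2 \<le> i \<or> N2 \<le> j \<longrightarrow> Y i j = 0" by blast
  then show "\<exists>N. \<forall>i j. N \<le> i \<or> N \<le> j \<longrightarrow> X i j + Y i j = 0"
    by (intro exI[of _ "max N1 N2"]) auto
qed
lift_definition uminus_fm :: "fm \<Rightarrow> fm" is "\<lambda>X i j. - X i j" by auto
lift_definition minus_fm :: "fm \<Rightarrow> fm \<Rightarrow> fm" is "\<lambda>X Y i j. X i j - Y i j"
proof -
  fix X Y :: "nat \<Rightarrow> nat \<Rightarrow> complex"
  assume "\<exists>N. \<forall>i j. N \<le> i \<or> N \<le> j \<longrightarrow> X i j = 0" "\<exists>N. \<forall>i j. N \<le> i \<or> N \<le> j \<longrightarrow> Y i j = 0"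
  then obtain N1 N2 where "\<forall>i j. N1 \<le> i \<or> N1 \<le> j \<longrightarrow> X i j = 0" "\<forall>i j. N2 \<le> i \<or> N2 \<le> j \<longrightarrow> Y i j = 0" by blast
  then show "\<exists>N. \<forall>i j. N \<le> i \<or> N \<le> j \<longrightarrow> X i j - Y i j = 0"
    by (intro exI[of _ "max N1 N2"]) auto
qed
lift_definition scaleR_fm :: "real \<Rightarrow> fm \<Rightarrow> fm" is "\<lambda>r X i j. complex_of_real r * X i j" by auto
definition times_fm :: "fm \<Rightarrow> fm \<Rightarrow> fm" where "times_fm X Y = Fm (fmul_raw X Y)"

lemma ent_times: "ent (X * Y) = fmul_raw X Y"
  unfolding times_fm_def by (rule Fm_inverse'[OF fmul_raw_supp])

lemma ent_times_any: "bnd X \<le> N \<Longrightarrow> ent (X * Y) i j = (\<Sum>k<N. ent X i k * ent Y k j)"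
  by (simp add: ent_times fmul_raw_any)

instance
proof
  fix a b c :: fm and r s :: real
  show "a * b * c = a * (b * c)"
  proof (rule ent_inject')
    fix i j
    define N where "N = max (bnd a) (max (bnd b) (bnd (a*b)))"
    have "ent (a * b * c) i j = (\<Sum>l<N. ent (a*b) i l * ent c l j)"
      by (rule ent_times_any) (simp add: N_def)
    also have "\<dots> = (\<Sum>l<N. (\<Sum>k<N. ent a i k * ent b k l) * ent c l j)"
      by (simp add: ent_times_any[of a N] N_def)
    also have "\<dots> = (\<Sum>k<N. ent a i k * (\<Sum>l<N. ent b k l * ent c l j))"
      unfolding sum_distrib_left sum_distrib_right by (subst sum.swap) (simp add: mult.assoc)
    also have "\<dots> = (\<Sum>k<N. ent a i k * ent (b * c) k j)"
      by (simp add: ent_times_any[of b N] N_def)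
    also have "\<dots> = ent (a * (b * c)) i j"
      by (rule ent_times_any[symmetric]) (simp add: N_def)
    finally show "ent (a * b * c) i j = ent (a * (b * c)) i j" .
  qed
  show "(a + b) * c = a * c + b * c"
  proof (rule ent_inject')
    fix i j
    define N where "N = max (bnd a) (max (bnd b) (bnd (a+b)))"
    show "ent ((a + b) * c) i j = ent (a * c + b * c) i j"
      by (simp add: ent_times_any[of "a+b" N] ent_times_any[of a N] ent_times_any[of b N] N_def plus_fm.rep_eq distrib_right sum.distrib)
  qed
  show "a * (b + c) = a * b + a * c"
    by (rule ent_inject') (simp add: ent_times plus_fm.rep_eq fmul_raw_def distrib_left sum.distrib)
  show "a + b + c = a + (b + c)" by transfer (simp add: add.assoc)
  show "a + b = b + a" by transfer (simp add: add.commute)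
  show "0 + a = a" by transfer simp
  show "- a + a = 0" by transfer simp
  show "a - b = a + - b" by transfer simp
  show "r *\<^sub>R (a + b) = r *\<^sub>R a + r *\<^sub>R b" by transfer (simp add: distrib_left)
  show "(r + s) *\<^sub>R a = r *\<^sub>R a + s *\<^sub>R a" by transfer (simp add: distrib_right)
  show "r *\<^sub>R s *\<^sub>R a = (r * s) *\<^sub>R a" by transfer (simp add: mult.assoc)
  show "1 *\<^sub>R a = a" by transfer simp
  show "r *\<^sub>R a * b = r *\<^sub>R (a * b)"
    by (rule ent_inject') (simp add: ent_times_any[of a "max (bnd a) (bnd (r *\<^sub>R a))"] ent_times_any[of "r *\<^sub>R a" "max (bnd a) (bnd (r *\<^sub>R a))"] scaleR_fm.rep_eq sum_distrib_left mult.assoc)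
  show "a * r *\<^sub>R b = r *\<^sub>R (a * b)"
    by (rule ent_inject') (simp add: ent_times fmul_raw_def scaleR_fm.rep_eq sum_distrib_left mult.assoc mult.left_commute)
qed
end

locale qs =
  fixes e :: "'m::real_algebra" and adj :: "'m \<Rightarrow> 'm" and psi :: "'m \<Rightarrow> real"
  assumes psi_add: "psi (x + y) = psi x + psi y"
    and psi_scale: "psi (r *\<^sub>R x) = r * psi x"
    and psi_e: "psi e = 1"
    and psi_pos: "0 \<le> psi (adj x * x)"
    and adj_mult: "adj (x * y) = adj y * adj x"
    and adj_add: "adj (x + y) = adj x + adj y"
    and adj_scale: "adj (r *\<^sub>R x) = r *\<^sub>R adj x"
    and adj_e: "adj e = e"
    and e_idem: "e * e = e"
begin

definition hi :: "'m \<Rightarrow> bool" where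
  "hi x \<longleftrightarrow> adj x = x \<and> x * x = e \<and> e * x = x \<and> x * e = x"

definition anti :: "'m \<Rightarrow> 'm \<Rightarrow> bool" where
  "anti x y \<longleftrightarrow> x * y = - (y * x)"

definition comm :: "'m \<Rightarrow> 'm \<Rightarrow> bool" where
  "comm x y \<longleftrightarrow> x * y = y * x"

lemma psi_0: "psi 0 = 0"
  using psi_add[of 0 0] by simp

lemma psi_uminus: "psi (- x) = - psi x"
  using psi_scale[of "-1" x] by simp

lemma psi_diff: "psi (x - y) = psi x - psi y"
  using psi_add[of x "- y"] psi_uminus[of y] by simp

lemma psi_sum: "psi (sum f F) = (\<Sum>i\<in>F. psi (f i))"
  by (induction F rule: infinite_finite_induct) (auto simp: psi_0 psi_add)

lemma adj_0: "adj 0 = 0"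
  using adj_add[of 0 0] by simp

lemma adj_uminus: "adj (- x) = - adj x"
  using adj_scale[of "-1" x] by simp

lemma adj_diff: "adj (x - y) = adj x - adj y"
  using adj_add[of x "- y"] adj_uminus[of y] by simp

lemma adj_sum: "adj (sum f F) = (\<Sum>i\<in>F. adj (f i))"
  by (induction F rule: infinite_finite_induct) (auto simp: adj_0 adj_add)

lemma anti_sym: "anti x y \<Longrightarrow> anti y x"
  unfolding anti_def by (metis minus_minus)

lemma comm_sym: "comm x y \<Longrightarrow> comm y x"
  unfolding comm_def by metis

lemma psi_sq_pos: "adj x = x \<Longrightarrow> 0 \<le> psi (x * x)"
  using psi_pos[of x] by simp

lemma clique_sum_props:
  assumes "finite F" "\<forall>i\<in>F. hi (t i)" "\<forall>i\<in>F. \<forall>j\<in>F. i \<noteq> j \<longrightarrow> anti (t i) (t j)"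
  shows "adj (\<Sum>i\<in>F. c i *\<^sub>R t i) = (\<Sum>i\<in>F. c i *\<^sub>R t i)
    \<and> e * (\<Sum>i\<in>F. c i *\<^sub>R t i) = (\<Sum>i\<in>F. c i *\<^sub>R t i)
    \<and> (\<Sum>i\<in>F. c i *\<^sub>R t i) * (\<Sum>i\<in>F. c i *\<^sub>R t i) = (\<Sum>i\<in>F. (c i)^2) *\<^sub>R e"
  using assms
proof (induction F rule: finite_induct)
  case empty
  then show ?case by (simp add: adj_0)
next
  case (insert x F)
  define A where "A = (\<Sum>i\<in>F. c i *\<^sub>R t i)"
  have IH: "adj A = A" "e * A = A" "A * A = (\<Sum>i\<in>F. (c i)^2) *\<^sub>R e"
    using insert by (auto simp: A_def)
  have hx: "hi (t x)" using insert by auto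
  have ant: "t x * A = - (A * t x)"
  proof -
    have "t x * A = (\<Sum>i\<in>F. c i *\<^sub>R (t x * t i))"
      by (simp add: A_def sum_distrib_left)
    also have "\<dots> = (\<Sum>i\<in>F. - (c i *\<^sub>R (t i * t x)))"
    proof (rule sum.cong)
      fix i assume "i \<in> F"
      then have "anti (t x) (t i)" using insert by (metis insert_iff)
      then show "c i *\<^sub>R (t x * t i) = - (c i *\<^sub>R (t i * t x))"
        unfolding anti_def by simp
    qed simp
    also have "\<dots> = - (A * t x)"
      by (simp add: A_def sum_distrib_right sum_negf)
    finally show ?thesis .
  qed
  have s: "(\<Sum>i\<in>insert x F. c i *\<^sub>R t i) = c x *\<^sub>R t x + A"
    using insert by (simp add: A_def)
  have "(c x *\<^sub>R t x + A) * (c x *\<^sub>R t x + A)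
      = (c x)^2 *\<^sub>R (t x * t x) + c x *\<^sub>R (t x * A + A * t x) + A * A"
    by (simp add: algebra_simps power2_eq_square)
  also have "\<dots> = (c x)^2 *\<^sub>R e + (\<Sum>i\<in>F. (c i)^2) *\<^sub>R e"
    using hx ant IH by (simp add: hi_def)
  finally have sq: "(c x *\<^sub>R t x + A) * (c x *\<^sub>R t x + A) = (\<Sum>i\<in>insert x F. (c i)^2) *\<^sub>R e"
    using insert by (simp add: scaleR_add_left)
  show ?case
    unfolding s using sq hx IH by (simp add: hi_def adj_add adj_scale distrib_left)
qed

lemma clique_bound:
  assumes "finite F" "\<forall>i\<in>F. hi (t i)" "\<forall>i\<in>F. \<forall>j\<in>F. i \<noteq> j \<longrightarrow> anti (t i) (t j)"
  shows "(\<Sum>i\<in>F. (psi (t i))^2) \<le> 1"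
proof -
  define A where "A = (\<Sum>i\<in>F. psi (t i) *\<^sub>R t i)"
  define s where "s = (\<Sum>i\<in>F. (psi (t i))^2)"
  have P: "adj A = A" "e * A = A" "A * A = s *\<^sub>R e"
    using clique_sum_props[OF assms, of "\<lambda>i. psi (t i)"] by (auto simp: A_def s_def)
  have AE: "A * e = A"
    using P(1,2) adj_mult[of e A] adj_e by simp
  have psiA: "psi A = s"
    by (simp add: A_def s_def psi_sum psi_scale power2_eq_square)
  have "0 \<le> psi (adj (e - A) * (e - A))" by (rule psi_pos)
  also have "adj (e - A) * (e - A) = e - A - A + s *\<^sub>R e"
    using P AE by (simp add: adj_diff adj_e algebra_simps e_idem)
  finally show ?thesis
    by (simp add: psi_diff psi_add psi_scale psi_e psiA s_def)
qed


lemma unit_dir_bound: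
  fixes u v w :: real
  assumes "\<And>\<alpha> \<beta>. \<alpha>^2 + \<beta>^2 = 1 \<Longrightarrow> \<alpha> * u + \<beta> * v \<le> w"
  shows "u^2 + v^2 \<le> w^2"
proof -
  have w0: "0 \<le> w"
    using assms[of 1 0] assms[of "-1" 0] by simp
  show ?thesis
  proof (cases "u^2 + v^2 = 0")
    case True then show ?thesis using w0 by simp
  next
    case False
    define n where "n = sqrt (u^2 + v^2)"
    have "0 < u^2 + v^2" using False by (metis add_nonneg_nonneg zero_le_power2 order_le_neq_trans)
    then have n0: "0 < n" by (simp add: n_def)
    have nn: "n^2 = u^2 + v^2" by (simp add: n_def)
    have "(u/n)^2 + (v/n)^2 = 1" using n0 nn False by (simp add: power_divide add_divide_distrib[symmetric])
    then have "(u/n) * u + (v/n) * v \<le> w" by (rule assms)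
    then have "(u^2 + v^2) / n \<le> w" by (simp add: power2_eq_square add_divide_distrib)
    moreover have "(u^2 + v^2) / n = n" using n0 by (simp only: nn[symmetric]) (simp add: power2_eq_square)
    ultimately have "n \<le> w" by simp
    then have "n^2 \<le> w^2" using n0 by (simp add: power_mono)
    then show ?thesis using nn by simp
  qed
qed

lemma proj_pos:
  assumes "adj P = P" "adj R = R" "P * P = P" "R * R = R" "P * R = R * P"
  shows "0 \<le> psi (P * R)"
proof -
  have "adj (P*R) * (P*R) = R * P * (P * R)" using assms by (simp add: adj_mult)
  also have "\<dots> = R * (P * P) * R" by (simp add: mult.assoc)
  also have "\<dots> = R * P * R" using assms by simp
  also have "\<dots> = P * R * R" using assms(5) by simp
  also have "\<dots> = P * R" using assms(4) by (simp add: mult.assoc)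
  finally show ?thesis using psi_pos[of "P * R"] by simp
qed

lemma triple_half:
  assumes ha: "hi a" and hb: "hi b" and hc: "hi c"
    and ab: "anti a b" and bc: "anti b c" and ac: "comm a c"
    and \<sigma>: "\<sigma> = 1 \<or> \<sigma> = -1" and ab1: "\<alpha>^2 + \<beta>^2 = 1"
  shows "\<alpha> * (psi a + \<sigma> * psi c) + \<beta> * (psi b + \<sigma> * psi (a * c * b)) \<le> 1 + \<sigma> * psi (a * c)"
proof -
  have aa: "a * a = e" "adj a = a" "e * a = a" "a * e = a" using ha by (auto simp: hi_def)
  have bb: "b * b = e" "adj b = b" "e * b = b" "b * e = b" using hb by (auto simp: hi_def)
  have cc: "c * c = e" "adj c = c" "e * c = c" "c * e = c" using hc by (auto simp: hi_def)
  have ba: "b * a = - (a * b)" using ab by (simp add: anti_def)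
  have cb: "c * b = - (b * c)" using bc by (simp add: anti_def)
  have ca: "c * a = a * c" using ac by (simp add: comm_def)
  define Q where "Q = a * c"
  have QQ: "Q * Q = e"
  proof -
    have "Q * Q = a * (c * a) * c" by (simp add: Q_def mult.assoc)
    also have "\<dots> = (a * a) * (c * c)" by (simp add: ca mult.assoc)
    finally show ?thesis using aa cc e_idem by simp
  qed
  have Qa: "Q * a = c"
  proof -
    have "Q * a = a * (c * a)" by (simp add: Q_def mult.assoc)
    also have "\<dots> = c" by (simp add: ca mult.assoc[symmetric] aa cc)
    finally show ?thesis .
  qed
  have aQ: "a * Q = c" by (simp add: Q_def mult.assoc[symmetric] aa cc)
  have Qb: "Q * b = b * Q"
  proof -
    have "Q * b = a * (c * b)" by (simp add: Q_def mult.assoc)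
    also have "\<dots> = - (a * b) * c" by (simp add: cb mult.assoc)
    also have "\<dots> = b * Q" by (simp add: ba[symmetric] Q_def mult.assoc)
    finally show ?thesis .
  qed
  have adjQ: "adj Q = Q" using aa cc ca by (simp add: Q_def adj_mult)
  have eQ1: "e * Q = (e * a) * c" by (simp add: Q_def mult.assoc)
  have eQ2: "Q * e = a * (c * e)" by (simp add: Q_def mult.assoc)
  have eQ: "e * Q = Q" "Q * e = Q" using eQ1 eQ2 aa cc by (simp_all add: Q_def)
  define A where "A = \<alpha> *\<^sub>R a + \<beta> *\<^sub>R b"
  have AA: "A * A = e"
  proof -
    have "A * A = (\<alpha>^2 + \<beta>^2) *\<^sub>R e + (\<alpha> * \<beta>) *\<^sub>R (a * b + b * a)"
      using aa bb by (simp add: A_def algebra_simps power2_eq_square)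
    then show ?thesis using ab1 ba by simp
  qed
  have QA: "Q * A = A * Q" using Qa aQ Qb Q_def ca
    by (simp add: A_def algebra_simps)
  have adjA: "adj A = A" using aa bb by (simp add: A_def adj_add adj_scale)
  have eA: "e * A = A" "A * e = A" using aa bb by (simp_all add: A_def algebra_simps)
  define P where "P = (1/2) *\<^sub>R (e + \<sigma> *\<^sub>R Q)"
  define R where "R = (1/2) *\<^sub>R (e - A)"
  have PP: "P * P = P"
  proof -
    have s2: "\<sigma> * \<sigma> = 1" using \<sigma> by auto
    have "(e + \<sigma> *\<^sub>R Q) * (e + \<sigma> *\<^sub>R Q) = e * e + \<sigma> *\<^sub>R (e * Q) + \<sigma> *\<^sub>R (Q * e) + (\<sigma> * \<sigma>) *\<^sub>R (Q * Q)"
      by (simp add: algebra_simps)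
    also have "\<dots> = 2 *\<^sub>R (e + \<sigma> *\<^sub>R Q)"
      using s2 QQ e_idem eQ by (simp add: scaleR_add_right scaleR_2) (metis scaleR_2 scaleR_scaleR)
    finally have "(e + \<sigma> *\<^sub>R Q) * (e + \<sigma> *\<^sub>R Q) = 2 *\<^sub>R (e + \<sigma> *\<^sub>R Q)" .
    then show ?thesis by (simp add: P_def)
  qed
  have RR: "R * R = R"
  proof -
    have "(e - A) * (e - A) = e * e - e * A - A * e + A * A"
      by (simp add: algebra_simps)
    also have "\<dots> = 2 *\<^sub>R (e - A)"
      using AA e_idem eA by (simp add: scaleR_2)
    finally have "(e - A) * (e - A) = 2 *\<^sub>R (e - A)" .
    then show ?thesis by (simp add: R_def)
  qed
  have PR: "P * R = R * P" using eQ eA QA by (simp add: P_def R_def algebra_simps)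
  have adjP: "adj P = P" using adjQ by (simp add: P_def adj_add adj_scale adj_e)
  have adjR: "adj R = R" using adjA by (simp add: R_def adj_diff adj_scale adj_e)
  have pos: "0 \<le> psi (P * R)" by (rule proj_pos[OF adjP adjR PP RR PR])
  have "P * R = (1/4) *\<^sub>R (e - \<alpha> *\<^sub>R a - \<beta> *\<^sub>R b + \<sigma> *\<^sub>R Q - (\<sigma> * \<alpha>) *\<^sub>R c - (\<sigma> * \<beta>) *\<^sub>R (Q * b))"
    using eA aa bb e_idem eQ Qa by (simp add: P_def R_def A_def algebra_simps)
  then have "psi (P * R) = (1/4) * (1 - \<alpha> * psi a - \<beta> * psi b + \<sigma> * psi Q - \<sigma> * \<alpha> * psi c - \<sigma> * \<beta> * psi (Q * b))"
    by (simp add: psi_diff psi_add psi_scale psi_e)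
  then show ?thesis using pos by (simp add: Q_def algebra_simps)
qed

lemma triple_bound:
  assumes "hi a" "hi b" "hi c" "anti a b" "anti b c" "comm a c"
  shows "(psi a)^2 + (psi b)^2 + (psi c)^2 \<le> 1 + (psi (a * c))^2"
proof -
  define r where "r = psi (a * c * b)"
  define q where "q = psi (a * c)"
  have "(psi a + 1 * psi c)^2 + (psi b + 1 * r)^2 \<le> (1 + 1 * q)^2"
    by (rule unit_dir_bound) (use triple_half[OF assms, of 1] in \<open>auto simp: r_def q_def\<close>)
  moreover have "(psi a + (-1) * psi c)^2 + (psi b + (-1) * r)^2 \<le> (1 + (-1) * q)^2"
    by (rule unit_dir_bound) (use triple_half[OF assms, of "-1"] in \<open>auto simp: r_def q_def\<close>)
  ultimately have "(psi a)^2 + (psi b)^2 + (psi c)^2 + r^2 \<le> 1 + q^2"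
    by (simp add: power2_eq_square algebra_simps)
  then show ?thesis using q_def by (smt (verit) zero_le_power2)
qed

end

fun chain :: "('b \<Rightarrow> 'b \<Rightarrow> bool) \<Rightarrow> 'b list \<Rightarrow> bool" where
  "chain R (x # y # zs) = (R x y \<and> chain R (y # zs))"
| "chain R _ = True"

lemma chain_tl: "chain R (y # zs) \<Longrightarrow> chain R zs"
  by (cases zs) auto

context qs
begin

lemma pair_bound:
  assumes "hi x" "hi y" "anti x y"
  shows "(psi x)^2 + (psi y)^2 \<le> 1"
proof -
  define t where "t = (\<lambda>i::nat. if i = 0 then x else y)"
  have "(\<Sum>i\<in>{0,1::nat}. (psi (t i))^2) \<le> 1"
    by (rule clique_bound) (use assms anti_sym[OF assms(3)] in \<open>auto simp: t_def\<close>)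
  then show ?thesis by (simp add: t_def)
qed

lemma tri_bound:
  assumes "hi x" "hi y" "hi z" "anti x y" "anti y z" "anti x z"
  shows "(psi x)^2 + (psi y)^2 + (psi z)^2 \<le> 1"
proof -
  define t where "t = (\<lambda>i::nat. if i = 0 then x else if i = 1 then y else z)"
  have "(\<Sum>i\<in>{0,1,2::nat}. (psi (t i))^2) \<le> 1"
    by (rule clique_bound) (use assms anti_sym[OF assms(4)] anti_sym[OF assms(5)] anti_sym[OF assms(6)] in \<open>auto simp: t_def\<close>)
  then show ?thesis by (simp add: t_def)
qed

lemma pairs_bound:
  "length ts = 2 * k \<Longrightarrow> \<forall>x\<in>set ts. hi x \<Longrightarrow> chain anti ts \<Longrightarrow> (\<Sum>x\<leftarrow>ts. (psi x)^2) \<le> real k"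
proof (induction k arbitrary: ts)
  case 0
  then show ?case by simp
next
  case (Suc k)
  then obtain x y rest where ts: "ts = x # y # rest"
    by (metis length_0_conv length_Suc_conv mult_Suc_right add_2_eq_Suc nat.distinct(1))
  have "length rest = 2 * k" using Suc.prems ts by simp
  moreover have "chain anti rest" using Suc.prems ts by (auto intro: chain_tl)
  ultimately have IH: "(\<Sum>x\<leftarrow>rest. (psi x)^2) \<le> real k" using Suc ts by auto
  have "(psi x)^2 + (psi y)^2 \<le> 1" by (rule pair_bound) (use Suc.prems ts in auto)
  then show ?case using IH ts by simp
qed

lemma hi_prod: "hi a \<Longrightarrow> hi c \<Longrightarrow> comm a c \<Longrightarrow> hi (a * c)"
proof -
  assume ha: "hi a" and hc: "hi c" and ac: "comm a c"
  have aa: "a * a = e" "adj a = a" "e * a = a" "a * e = a" using ha by (auto simp: hi_def)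
  have cc: "c * c = e" "adj c = c" "e * c = c" "c * e = c" using hc by (auto simp: hi_def)
  have ca: "c * a = a * c" using ac by (simp add: comm_def)
  have 1: "adj (a * c) = a * c" using aa cc ca by (simp add: adj_mult)
  have "a * c * (a * c) = a * (c * a) * c" by (simp add: mult.assoc)
  also have "\<dots> = (a * a) * (c * c)" by (simp add: ca mult.assoc)
  finally have 2: "a * c * (a * c) = e" using aa cc e_idem by simp
  have 3: "e * (a * c) = a * c" by (simp add: mult.assoc[symmetric] aa)
  have 4: "a * c * e = a * c" by (simp add: mult.assoc cc)
  show ?thesis using 1 2 3 4 by (simp add: hi_def)
qed

lemma sign_prod:
  fixes a c x :: 'm
  assumes "a * x = u *\<^sub>R (x * a)" "c * x = v *\<^sub>R (x * c)"
  shows "a * c * x = (u * v) *\<^sub>R (x * (a * c))"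
proof -
  have "a * c * x = a * (c * x)" by (simp add: mult.assoc)
  also have "\<dots> = v *\<^sub>R ((a * x) * c)" using assms(2) by (simp add: mult.assoc)
  also have "\<dots> = v *\<^sub>R (u *\<^sub>R ((x * a) * c))" using assms(1) by simp
  also have "\<dots> = (u * v) *\<^sub>R (x * (a * c))" by (simp add: mult.assoc)
  finally show ?thesis .
qed

lemma comm_sign: "comm a x \<longleftrightarrow> a * x = 1 *\<^sub>R (x * a)"
  by (simp add: comm_def)

lemma anti_sign: "anti a x \<longleftrightarrow> a * x = (-1) *\<^sub>R (x * a)"
  by (simp add: anti_def)

lemma rel_prod:
  assumes "comm a x \<or> anti a x" "comm c x \<or> anti c x"
  shows "comm (a * c) x \<or> anti (a * c) x"
  using assms unfolding comm_sign anti_sign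
  by (elim disjE) (drule (1) sign_prod, simp)+

lemma anti_prod1: "anti c x \<Longrightarrow> comm a x \<Longrightarrow> anti (a * c) x"
  unfolding comm_sign anti_sign by (drule (1) sign_prod[of a x 1 c "-1"]) simp

lemma anti_prod2: "anti a x \<Longrightarrow> comm c x \<Longrightarrow> anti (a * c) x"
  unfolding comm_sign anti_sign by (drule (1) sign_prod) simp

lemma len3: "length ts = 3 \<Longrightarrow> \<exists>x y z. ts = [x, y, z]"
  by (cases ts; cases "tl ts"; cases "tl (tl ts)") (auto simp: numeral_3_eq_3)

lemma odd_cycle_bound:
  "length ts = 2 * a + 1 \<Longrightarrow> 1 \<le> a \<Longrightarrow> \<forall>x\<in>set ts. hi x
   \<Longrightarrow> \<forall>x\<in>set ts. \<forall>y\<in>set ts. comm x y \<or> anti x y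
   \<Longrightarrow> chain anti ts \<Longrightarrow> anti (last ts) (hd ts)
   \<Longrightarrow> (\<Sum>x\<leftarrow>ts. (psi x)^2) \<le> real a"
proof (induction a arbitrary: ts rule: less_induct)
  case (less a)
  show ?case
  proof (cases "a = 1")
    case True
    have "length ts = 3" using less.prems(1) True by simp
    then obtain x y z where ts: "ts = [x, y, z]" using len3 by blast
    have "(psi x)^2 + (psi y)^2 + (psi z)^2 \<le> 1"
      by (rule tri_bound) (use less.prems ts anti_sym in auto)
    then show ?thesis using ts True by simp
  next
    case False
    then have a2: "2 \<le> a" using less.prems(2) by simp
    then obtain t0 t1 t2 t3 rest' where ts: "ts = t0 # t1 # t2 # t3 # rest'"
      using less.prems(1)
      by (cases ts; cases "tl ts"; cases "tl (tl ts)"; cases "tl (tl (tl ts))") auto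
    define rest where "rest = t3 # rest'"
    define L where "L = last rest"
    have ts': "ts = t0 # t1 # t2 # rest" by (simp add: ts rest_def)
    have lenr: "length rest = 2 * (a - 1)" using less.prems(1) ts' a2 by simp
    have hi_all: "\<forall>x\<in>set ts. hi x" by (rule less.prems(3))
    have rel_all: "\<forall>x\<in>set ts. \<forall>y\<in>set ts. comm x y \<or> anti x y" by (rule less.prems(4))
    have h0: "hi t0" and h1: "hi t1" and h2: "hi t2" and hr: "\<forall>x\<in>set rest. hi x"
      using hi_all ts' by auto
    have a01: "anti t0 t1" and a12: "anti t1 t2" and a23: "anti t2 t3" and chr: "chain anti rest"
      using less.prems(5) by (auto simp: ts rest_def)
    have aL0: "anti L t0" using less.prems(6) by (simp add: ts' L_def rest_def)
    have Lin: "L \<in> set rest" by (simp add: L_def rest_def)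
    have t3in: "t3 \<in> set rest" by (simp add: rest_def)
    have sum_eq: "(\<Sum>x\<leftarrow>ts. (psi x)^2) = (psi t0)^2 + (psi t1)^2 + (psi t2)^2 + (\<Sum>x\<leftarrow>rest. (psi x)^2)"
      by (simp add: ts')
    have am1: "a - 1 < a" "1 \<le> a - 1" using a2 by auto
    consider (i) "anti t0 t2" | (ii) "anti t0 t3" | (iii) "anti t2 L"
      | (iv) "comm t0 t2" "comm t0 t3" "comm t2 L"
      using rel_all ts' t3in Lin by auto
    then show ?thesis
    proof cases
      case i
      have "(psi t0)^2 + (psi t1)^2 + (psi t2)^2 \<le> 1"
        by (rule tri_bound) (use h0 h1 h2 a01 a12 i in auto)
      moreover have "(\<Sum>x\<leftarrow>rest. (psi x)^2) \<le> real (a - 1)"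
        by (rule pairs_bound[OF lenr hr chr])
      ultimately show ?thesis using sum_eq a2 by (simp add: of_nat_diff)
    next
      case ii
      have "(\<Sum>x\<leftarrow>t0 # rest. (psi x)^2) \<le> real (a - 1)"
      proof (rule less.IH[OF am1(1) _ am1(2)])
        show "length (t0 # rest) = 2 * (a - 1) + 1" using lenr by simp
        show "\<forall>x\<in>set (t0 # rest). hi x" using hi_all ts' by auto
        show "\<forall>x\<in>set (t0 # rest). \<forall>y\<in>set (t0 # rest). comm x y \<or> anti x y"
          using rel_all ts' by auto
        show "chain anti (t0 # rest)" using ii chr by (simp add: rest_def)
        show "anti (last (t0 # rest)) (hd (t0 # rest))" using aL0 by (simp add: L_def rest_def)
      qed
      moreover have "(psi t1)^2 + (psi t2)^2 \<le> 1" by (rule pair_bound[OF h1 h2 a12])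
      ultimately show ?thesis using sum_eq a2 by (simp add: of_nat_diff)
    next
      case iii
      have "(\<Sum>x\<leftarrow>t2 # rest. (psi x)^2) \<le> real (a - 1)"
      proof (rule less.IH[OF am1(1) _ am1(2)])
        show "length (t2 # rest) = 2 * (a - 1) + 1" using lenr by simp
        show "\<forall>x\<in>set (t2 # rest). hi x" using hi_all ts' by auto
        show "\<forall>x\<in>set (t2 # rest). \<forall>y\<in>set (t2 # rest). comm x y \<or> anti x y"
          using rel_all ts' by auto
        show "chain anti (t2 # rest)" using a23 chr by (simp add: rest_def)
        show "anti (last (t2 # rest)) (hd (t2 # rest))" using anti_sym[OF iii] by (simp add: L_def rest_def)
      qed
      moreover have "(psi t0)^2 + (psi t1)^2 \<le> 1" by (rule pair_bound[OF h0 h1 a01])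
      ultimately show ?thesis using sum_eq a2 by (simp add: of_nat_diff)
    next
      case iv
      define Q where "Q = t0 * t2"
      have hQ: "hi Q" unfolding Q_def by (rule hi_prod[OF h0 h2 iv(1)])
      have Qrel: "comm Q x \<or> anti Q x" if "x \<in> set rest" for x
        unfolding Q_def by (rule rel_prod) (use rel_all ts' that in auto)
      have Qrel': "comm x Q \<or> anti x Q" if "x \<in> set rest" for x
        using Qrel[OF that] comm_sym anti_sym by blast
      have aQ3: "anti Q t3" unfolding Q_def by (rule anti_prod1[OF a23 iv(2)])
      have aLQ: "anti L Q"
        using anti_sym[OF anti_prod2[OF anti_sym[OF aL0] iv(3)]] by (simp add: Q_def)
      have "(\<Sum>x\<leftarrow>Q # rest. (psi x)^2) \<le> real (a - 1)"
      proof (rule less.IH[OF am1(1) _ am1(2)])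
        show "length (Q # rest) = 2 * (a - 1) + 1" using lenr by simp
        show "\<forall>x\<in>set (Q # rest). hi x" using hr hQ by auto
        show "\<forall>x\<in>set (Q # rest). \<forall>y\<in>set (Q # rest). comm x y \<or> anti x y"
          using rel_all ts' Qrel Qrel' by (auto simp: comm_def)
        show "chain anti (Q # rest)" using aQ3 chr by (simp add: rest_def)
        show "anti (last (Q # rest)) (hd (Q # rest))" using aLQ by (simp add: L_def rest_def)
      qed
      moreover have "(psi t0)^2 + (psi t1)^2 + (psi t2)^2 \<le> 1 + (psi Q)^2"
        unfolding Q_def by (rule triple_bound[OF h0 h1 h2 a01 a12 iv(1)])
      ultimately show ?thesis using sum_eq a2 by (simp add: of_nat_diff)
    qed
  qed
qed

end

context qs
begin

lemma proj_half:
  assumes hq: "hi q" and s: "\<sigma> = 1 \<or> \<sigma> = -1"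
  defines "F \<equiv> (1/2) *\<^sub>R (e + \<sigma> *\<^sub>R q)"
  shows "F * F = F" "adj F = F" "e * F = F" "F * e = F" "q * F = \<sigma> *\<^sub>R F"
proof -
  have qq: "q * q = e" "adj q = q" "e * q = q" "q * e = q" using hq by (auto simp: hi_def)
  have s2: "\<sigma> * \<sigma> = 1" using s by auto
  have "(e + \<sigma> *\<^sub>R q) * (e + \<sigma> *\<^sub>R q) = e * e + \<sigma> *\<^sub>R (e * q) + \<sigma> *\<^sub>R (q * e) + (\<sigma> * \<sigma>) *\<^sub>R (q * q)"
    by (simp add: algebra_simps)
  also have "\<dots> = 2 *\<^sub>R (e + \<sigma> *\<^sub>R q)"
    using s2 qq e_idem by (simp add: scaleR_add_right scaleR_2) (metis scaleR_2 scaleR_scaleR)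
  finally have "(e + \<sigma> *\<^sub>R q) * (e + \<sigma> *\<^sub>R q) = 2 *\<^sub>R (e + \<sigma> *\<^sub>R q)" .
  then show "F * F = F" by (simp add: F_def)
  show "adj F = F" using qq by (simp add: F_def adj_add adj_scale adj_e)
  show "e * F = F" using qq e_idem by (simp add: F_def algebra_simps)
  show "F * e = F" using qq e_idem by (simp add: F_def algebra_simps)
  have "q * (e + \<sigma> *\<^sub>R q) = \<sigma> *\<^sub>R (e + \<sigma> *\<^sub>R q)"
    using qq s2 by (simp add: algebra_simps)
  then show "q * F = \<sigma> *\<^sub>R F" by (simp add: F_def)
qed

lemma joint_proj:
  "\<forall>t\<in>set ts. hi t \<Longrightarrow> \<forall>t\<in>set ts. \<forall>u\<in>set ts. comm t u \<Longrightarrow>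
   \<exists>P. adj P = P \<and> P * P = P \<and> e * P = P \<and> P * e = P \<and> 0 < psi P
     \<and> (\<forall>t\<in>set ts. t * P = P \<or> t * P = - P)
     \<and> (\<forall>x. e * x = x \<and> x * e = x \<and> (\<forall>t\<in>set ts. comm t x) \<longrightarrow> comm P x)"
proof (induction ts)
  case Nil
  show ?case
    by (rule exI[of _ e]) (simp add: adj_e e_idem psi_e comm_def)
next
  case (Cons t ts)
  then obtain P where P: "adj P = P" "P * P = P" "e * P = P" "P * e = P" "0 < psi P"
     "\<forall>t\<in>set ts. t * P = P \<or> t * P = - P"
     "\<forall>x. e * x = x \<and> x * e = x \<and> (\<forall>t\<in>set ts. comm t x) \<longrightarrow> comm P x"
    by auto
  have ht: "hi t" using Cons.prems by auto
  have tt: "t * t = e" "adj t = t" "e * t = t" "t * e = t" using ht by (auto simp: hi_def)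
  have ctP: "comm P t" using P(7) tt Cons.prems(2) by auto
  define F where "F = (\<lambda>\<sigma>::real. (1/2) *\<^sub>R (e + \<sigma> *\<^sub>R t))"
  have Fp: "F \<sigma> * F \<sigma> = F \<sigma>" "adj (F \<sigma>) = F \<sigma>" "e * F \<sigma> = F \<sigma>" "F \<sigma> * e = F \<sigma>" "t * F \<sigma> = \<sigma> *\<^sub>R F \<sigma>"
    if "\<sigma> = 1 \<or> \<sigma> = -1" for \<sigma>
    using proj_half[OF ht that] by (simp_all add: F_def)
  have FP: "F \<sigma> * P = P * F \<sigma>" for \<sigma>
    using ctP P(3,4) by (simp add: F_def comm_def algebra_simps)
  have pos: "0 \<le> psi (F \<sigma> * P)" if "\<sigma> = 1 \<or> \<sigma> = -1" for \<sigma>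
    by (rule proj_pos) (use Fp[OF that] P FP in auto)
  have "F 1 + F (-1) = e" by (simp add: F_def algebra_simps scaleR_2[symmetric])
  then have "psi (F 1 * P) + psi (F (-1) * P) = psi P"
    by (metis P(3) distrib_right psi_add)
  then obtain \<sigma> where s: "\<sigma> = 1 \<or> \<sigma> = -1" and ps: "0 < psi (F \<sigma> * P)"
    using P(5) pos[of 1] pos[of "-1"] by (smt (verit))
  note Fs = Fp[OF s]
  have s2: "\<sigma> * \<sigma> = 1" using s by auto
  show ?case
  proof (rule exI[of _ "F \<sigma> * P"], intro conjI)
    show "adj (F \<sigma> * P) = F \<sigma> * P" using Fs P FP by (simp add: adj_mult)
    show "F \<sigma> * P * (F \<sigma> * P) = F \<sigma> * P"
    proof -
      have "F \<sigma> * P * (F \<sigma> * P) = F \<sigma> * (P * F \<sigma>) * P" by (simp add: mult.assoc)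
      also have "\<dots> = (F \<sigma> * F \<sigma>) * (P * P)" by (simp add: FP[symmetric] mult.assoc)
      finally show ?thesis using Fs P by simp
    qed
    show "e * (F \<sigma> * P) = F \<sigma> * P" using Fs by (simp add: mult.assoc[symmetric])
    show "F \<sigma> * P * e = F \<sigma> * P" using P by (simp add: mult.assoc)
    show "0 < psi (F \<sigma> * P)" by (rule ps)
    show "\<forall>u\<in>set (t # ts). u * (F \<sigma> * P) = F \<sigma> * P \<or> u * (F \<sigma> * P) = - (F \<sigma> * P)"
    proof
      fix u assume u: "u \<in> set (t # ts)"
      show "u * (F \<sigma> * P) = F \<sigma> * P \<or> u * (F \<sigma> * P) = - (F \<sigma> * P)"
      proof (cases "u = t")
        case True
        have "u * (F \<sigma> * P) = \<sigma> *\<^sub>R (F \<sigma> * P)" using Fs True by (simp add: mult.assoc[symmetric])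
        then show ?thesis using s by auto
      next
        case False
        then have uts: "u \<in> set ts" using u by auto
        have hu: "hi u" using Cons.prems uts by auto
        have ut: "comm u t" using Cons.prems uts by auto
        have uF: "u * F \<sigma> = F \<sigma> * u"
          using ut hu by (simp add: F_def comm_def hi_def algebra_simps)
        have "u * (F \<sigma> * P) = F \<sigma> * (u * P)" by (simp add: mult.assoc[symmetric] uF)
        then show ?thesis using P(6) uts by auto
      qed
    qed
    show "\<forall>x. e * x = x \<and> x * e = x \<and> (\<forall>u\<in>set (t # ts). comm u x) \<longrightarrow> comm (F \<sigma> * P) x"
    proof (intro allI impI)
      fix x assume x: "e * x = x \<and> x * e = x \<and> (\<forall>u\<in>set (t # ts). comm u x)"
      then have Px: "comm P x" using P(7) by auto
      have tx: "t * x = x * t" using x by (auto simp: comm_def)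
      have Fx: "F \<sigma> * x = x * F \<sigma>" using x tx by (simp add: F_def algebra_simps)
      show "comm (F \<sigma> * P) x"
        using Px Fx unfolding comm_def by (metis mult.assoc)
    qed
  qed
qed

end

lift_definition adjf :: "fm \<Rightarrow> fm" is "\<lambda>X i j. cnj (X j i)"
  by (metis complex_cnj_zero)

lift_definition trunc :: "nat \<Rightarrow> (nat \<Rightarrow> nat \<Rightarrow> complex) \<Rightarrow> fm" is
  "\<lambda>d A i j. if i < d \<and> j < d then A i j else 0"
  by (metis not_le)

definition eye :: "nat \<Rightarrow> fm" where
  "eye d = trunc d (\<lambda>i j. if i = j then 1 else 0)"

definition psiR :: "nat \<Rightarrow> (nat \<Rightarrow> nat \<Rightarrow> complex) \<Rightarrow> fm \<Rightarrow> real" where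
  "psiR d \<rho> X = Re (\<Sum>i<d. \<Sum>k<d. \<rho> i k * ent X k i)"

lemma bnd_trunc: "bnd (trunc d A) \<le> N \<Longrightarrow> True" by simp

lemma ent_trunc_ge: "d \<le> k \<Longrightarrow> ent (trunc d A) i k = 0" "d \<le> k \<Longrightarrow> ent (trunc d A) k j = 0"
  by (simp_all add: trunc.rep_eq)

lemma ent_times_sum_ge:
  assumes "\<And>i k. N \<le> k \<Longrightarrow> ent X i k = 0"
  shows "ent (X * Y) i j = (\<Sum>k<N. ent X i k * ent Y k j)"
proof -
  define M where "M = max N (bnd X)"
  have "ent (X * Y) i j = (\<Sum>k<M. ent X i k * ent Y k j)"
    by (rule ent_times_any) (simp add: M_def)
  also have "\<dots> = (\<Sum>k<N. ent X i k * ent Y k j)"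
    by (rule sum.mono_neutral_right) (auto simp: M_def assms)
  finally show ?thesis .
qed

lemma trunc_mult: "trunc d A * trunc d B = trunc d (mat_mult d A B)"
proof (rule ent_inject')
  fix i j
  show "ent (trunc d A * trunc d B) i j = ent (trunc d (mat_mult d A B)) i j"
    by (subst ent_times_sum_ge[of d]) (auto simp: trunc.rep_eq mat_mult_def)
qed

lemma trunc_cong: "(\<And>i j. i < d \<Longrightarrow> j < d \<Longrightarrow> A i j = B i j) \<Longrightarrow> trunc d A = trunc d B"
  by (rule ent_inject') (simp add: trunc.rep_eq)

lemma trunc_uminus: "trunc d (\<lambda>i j. - A i j) = - trunc d A"
  by (rule ent_inject') (simp add: trunc.rep_eq uminus_fm.rep_eq)

lemma adjf_trunc: "adjf (trunc d A) = trunc d (\<lambda>i j. cnj (A j i))"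
  by (rule ent_inject') (simp add: trunc.rep_eq adjf.rep_eq)

lemma psiR_trunc: "psiR d \<rho> (trunc d A) = Re (mtrace d (mat_mult d \<rho> A))"
  by (simp add: psiR_def mtrace_def mat_mult_def trunc.rep_eq)

lemma gram_nonneg:
  fixes x :: fm
  shows "0 \<le> Re (\<Sum>i<d. \<Sum>j<d. cnj (v i) * ent (adjf x * x) i j * v j)"
proof -
  define N where "N = max (bnd x) (bnd (adjf x))"
  have e: "ent (adjf x * x) i j = (\<Sum>l<N. cnj (ent x l i) * ent x l j)" for i j
    by (subst ent_times_any[of _ N]) (auto simp: N_def adjf.rep_eq)
  define F where "F = (\<lambda>l i j. cnj (ent x l i) * cnj (v i) * (ent x l j * v j))"
  have "(\<Sum>i<d. \<Sum>j<d. cnj (v i) * ent (adjf x * x) i j * v j) = (\<Sum>i<d. \<Sum>j<d. \<Sum>l<N. F l i j)"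
    unfolding e F_def by (simp add: sum_distrib_left sum_distrib_right mult_ac)
  also have "\<dots> = (\<Sum>i<d. \<Sum>l<N. \<Sum>j<d. F l i j)"
    by (rule sum.cong[OF refl], rule sum.swap)
  also have "\<dots> = (\<Sum>l<N. \<Sum>i<d. \<Sum>j<d. F l i j)"
    by (rule sum.swap)
  also have "\<dots> = (\<Sum>l<N. cnj (\<Sum>i<d. ent x l i * v i) * (\<Sum>j<d. ent x l j * v j))"
    by (simp add: F_def sum_product)
  also have "\<dots> = (\<Sum>l<N. complex_of_real ((cmod (\<Sum>j<d. ent x l j * v j))^2))"
  proof -
    have cz: "\<And>z. cnj z * z = complex_of_real ((cmod z)^2)"
      by (metis complex_norm_square mult.commute)
    show ?thesis by (simp only: cz)
  qed
  finally show ?thesis by (simp add: sum_nonneg)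
qed

lemma qs_density:
  assumes "density_matrix d \<rho>"
  shows "qs (eye d) adjf (psiR d \<rho>)"
proof
  fix x y :: fm and r :: real
  show "psiR d \<rho> (x + y) = psiR d \<rho> x + psiR d \<rho> y"
    by (simp add: psiR_def plus_fm.rep_eq distrib_left sum.distrib)
  show "psiR d \<rho> (r *\<^sub>R x) = r * psiR d \<rho> x"
  proof -
    have "(\<Sum>i<d. \<Sum>k<d. \<rho> i k * ent (r *\<^sub>R x) k i) = complex_of_real r * (\<Sum>i<d. \<Sum>k<d. \<rho> i k * ent x k i)"
      by (simp add: scaleR_fm.rep_eq sum_distrib_left mult_ac)
    then show ?thesis by (simp add: psiR_def)
  qed
  show "psiR d \<rho> (eye d) = 1"
  proof -
    have "(\<Sum>k<d. \<rho> i k * ent (eye d) k i) = \<rho> i i" if "i < d" for i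
    proof -
      have "(\<Sum>k<d. \<rho> i k * ent (eye d) k i) = (\<Sum>k<d. if k = i then \<rho> i i else 0)"
        by (rule sum.cong) (auto simp: eye_def trunc.rep_eq that)
      then show ?thesis using that by simp
    qed
    then have "(\<Sum>i<d. \<Sum>k<d. \<rho> i k * ent (eye d) k i) = (\<Sum>i<d. \<rho> i i)"
      by simp
    moreover have "mtrace d \<rho> = 1" using assms unfolding density_matrix_def by (elim conjE)
    ultimately show ?thesis by (simp add: psiR_def mtrace_def)
  qed
  show "0 \<le> psiR d \<rho> (adjf x * x)"
  proof -
    define N where "N = max (bnd x) (bnd (adjf x))"
    have e: "ent (adjf x * x) k i = (\<Sum>l<N. cnj (ent x l k) * ent x l i)" for i k
      by (subst ent_times_any[of _ N]) (auto simp: N_def adjf.rep_eq)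
    define G where "G = (\<lambda>l i k. ent x l i * \<rho> i k * cnj (ent x l k))"
    have "(\<Sum>i<d. \<Sum>k<d. \<rho> i k * ent (adjf x * x) k i) = (\<Sum>i<d. \<Sum>k<d. \<Sum>l<N. G l i k)"
      unfolding e G_def by (simp add: sum_distrib_left mult_ac)
    also have "\<dots> = (\<Sum>i<d. \<Sum>l<N. \<Sum>k<d. G l i k)"
      by (rule sum.cong[OF refl], rule sum.swap)
    also have "\<dots> = (\<Sum>l<N. \<Sum>i<d. \<Sum>k<d. G l i k)"
      by (rule sum.swap)
    finally have eq: "(\<Sum>i<d. \<Sum>k<d. \<rho> i k * ent (adjf x * x) k i) = (\<Sum>l<N. \<Sum>i<d. \<Sum>k<d. G l i k)" .
    have "0 \<le> Re (\<Sum>i<d. \<Sum>k<d. G l i k)" for l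
    proof -
      have psd: "\<forall>v::nat\<Rightarrow>complex. 0 \<le> Re (\<Sum>i<d. \<Sum>j<d. cnj (v i) * \<rho> i j * v j)"
        using assms unfolding density_matrix_def by (elim conjE)
      show ?thesis using spec[OF psd, of "\<lambda>i. cnj (ent x l i)"] by (simp add: G_def)
    qed
    then show ?thesis unfolding psiR_def eq by (simp add: sum_nonneg)
  qed
  show "adjf (x * y) = adjf y * adjf x"
  proof (rule ent_inject')
    fix i j
    define N where "N = max (bnd x) (bnd (adjf y))"
    show "ent (adjf (x * y)) i j = ent (adjf y * adjf x) i j"
      by (simp add: adjf.rep_eq ent_times_any[of x N] ent_times_any[of "adjf y" N] N_def mult.commute)
  qed
  show "adjf (x + y) = adjf x + adjf y"
    by (rule ent_inject') (simp add: adjf.rep_eq plus_fm.rep_eq)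
  show "adjf (r *\<^sub>R x) = r *\<^sub>R adjf x"
    by (rule ent_inject') (simp add: adjf.rep_eq scaleR_fm.rep_eq)
  show "adjf (eye d) = eye d"
    by (rule ent_inject') (simp add: adjf.rep_eq eye_def trunc.rep_eq)
  show "eye d * eye d = eye d"
    unfolding eye_def trunc_mult
  proof (rule trunc_cong)
    fix i j assume ij: "i < d" "j < d"
    have "mat_mult d (\<lambda>i j. if i = j then 1 else 0) (\<lambda>i j. if i = j then 1 else 0) i j
        = (\<Sum>k<d. if k = i then (if i = j then 1 else 0) else 0)"
      unfolding mat_mult_def by (rule sum.cong) auto
    then show "mat_mult d (\<lambda>i j. if i = j then 1 else 0) (\<lambda>i j. if i = j then 1 else (0::complex)) i j
        = (if i = j then 1 else 0)" using ij by simp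
  qed
qed

abbreviation bt :: "nat \<Rightarrow> nat \<Rightarrow> nat" where
  "bt l k \<equiv> (k div 2 ^ l) mod 2"

lemma sum_lessThan_add: "(\<Sum>k<a + (b::nat). g k) = (\<Sum>k<a. g k) + (\<Sum>k<b. g (a + k))"
  by (induction b) (simp_all add: add.assoc)

lemma bt_high: "k < 2 ^ m \<Longrightarrow> bt m k = 0"
  by simp

lemma bt_shift: "l < m \<Longrightarrow> bt l (2 ^ m + k) = bt l k"
proof -
  assume lm: "l < m"
  have "(2::nat) ^ m = 2 ^ (m - l) * 2 ^ l" using lm by (simp add: power_add[symmetric])
  then have "(2 ^ m + k) div 2 ^ l = 2 ^ (m - l) + k div 2 ^ l"
    by simp
  moreover obtain q where "(2::nat) ^ (m - l) = 2 * q" using lm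
    by (metis Suc_diff_Suc power_Suc)
  ultimately show ?thesis by simp
qed

lemma bt_top: "k < 2 ^ m \<Longrightarrow> bt m (2 ^ m + k) = 1"
proof -
  assume "k < 2 ^ m"
  then have "(2 ^ m + k) div 2 ^ m = 1" by simp
  then show ?thesis by simp
qed

lemma sum_bits:
  fixes f :: "nat \<Rightarrow> nat \<Rightarrow> complex"
  shows "(\<Sum>k<2 ^ m. \<Prod>l<m. f l (bt l k)) = (\<Prod>l<m. f l 0 + f l 1)"
proof (induction m)
  case 0
  then show ?case by simp
next
  case (Suc m)
  have "(\<Sum>k<2 ^ Suc m. \<Prod>l<Suc m. f l (bt l k))
      = (\<Sum>k<2 ^ m. \<Prod>l<Suc m. f l (bt l k)) + (\<Sum>k<2 ^ m. \<Prod>l<Suc m. f l (bt l (2 ^ m + k)))"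
    using sum_lessThan_add[of "\<lambda>k. \<Prod>l<Suc m. f l (bt l k)" "2 ^ m" "2 ^ m"] by (simp add: mult_2)
  also have "(\<Sum>k<2 ^ m. \<Prod>l<Suc m. f l (bt l k)) = (\<Sum>k<2 ^ m. (\<Prod>l<m. f l (bt l k)) * f m 0)"
    by (rule sum.cong) (simp_all add: bt_high)
  also have "\<dots> = (\<Sum>k<2 ^ m. \<Prod>l<m. f l (bt l k)) * f m 0"
    by (rule sum_distrib_right[symmetric])
  also have "(\<Sum>k<2 ^ m. \<Prod>l<Suc m. f l (bt l (2 ^ m + k))) = (\<Sum>k<2 ^ m. \<Prod>l<m. f l (bt l k)) * f m 1"
  proof -
    have "(\<Prod>l<Suc m. f l (bt l (2 ^ m + k))) = (\<Prod>l<m. f l (bt l k)) * f m 1" if "k < 2 ^ m" for k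
    proof -
      have "(\<Prod>l<m. f l (bt l (2 ^ m + k))) = (\<Prod>l<m. f l (bt l k))"
        by (rule prod.cong) (auto simp: bt_shift)
      then show ?thesis using bt_top[OF that] by simp
    qed
    then have "(\<Sum>k<2 ^ m. \<Prod>l<Suc m. f l (bt l (2 ^ m + k))) = (\<Sum>k<2 ^ m. (\<Prod>l<m. f l (bt l k)) * f m 1)"
      by (intro sum.cong) auto
    then show ?thesis by (simp add: sum_distrib_right)
  qed
  finally show ?case using Suc by (simp add: distrib_left)
qed

lemma bits_eq: "i < 2 ^ m \<Longrightarrow> j < 2 ^ m \<Longrightarrow> (\<forall>l<m. bt l i = bt l j) \<Longrightarrow> i = j"
proof (induction m arbitrary: i j)
  case 0
  then show ?case by simp
next
  case (Suc m)
  have "i div 2 = j div 2"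
  proof (rule Suc.IH)
    show "i div 2 < 2 ^ m" "j div 2 < 2 ^ m" using Suc.prems by auto
    show "\<forall>l<m. bt l (i div 2) = bt l (j div 2)"
    proof (intro allI impI)
      fix l assume "l < m"
      then have "bt (Suc l) i = bt (Suc l) j" using Suc.prems by auto
      then show "bt l (i div 2) = bt l (j div 2)" by (simp add: div_mult2_eq)
    qed
  qed
  moreover have "i mod 2 = j mod 2" using Suc.prems(3) by auto
  ultimately show ?case by (metis div_mult_mod_eq)
qed

definition pm2 :: "pauli \<Rightarrow> pauli \<Rightarrow> nat \<Rightarrow> nat \<Rightarrow> complex" where
  "pm2 a b r c = pauli_entry a r 0 * pauli_entry b 0 c + pauli_entry a r 1 * pauli_entry b 1 c"

lemma pauli_mult:
  assumes "length p = m" "length q = m"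
  shows "mat_mult (2 ^ m) (pauli_mat p) (pauli_mat q) i j = (\<Prod>l<m. pm2 (p ! l) (q ! l) (bt l i) (bt l j))"
proof -
  have "mat_mult (2 ^ m) (pauli_mat p) (pauli_mat q) i j
      = (\<Sum>k<2 ^ m. \<Prod>l<m. pauli_entry (p ! l) (bt l i) (bt l k) * pauli_entry (q ! l) (bt l k) (bt l j))"
    by (simp add: mat_mult_def pauli_mat_def assms prod.distrib)
  also have "\<dots> = (\<Prod>l<m. pm2 (p ! l) (q ! l) (bt l i) (bt l j))"
    by (subst sum_bits) (simp add: pm2_def)
  finally show ?thesis .
qed

lemma bit_cases: "bt l k = 0 \<or> bt l k = 1" by auto

lemma pm2_sq: "r < 2 \<Longrightarrow> c < 2 \<Longrightarrow> pm2 a a r c = (if r = c then 1 else 0)"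
  by (cases a) (auto simp: pm2_def less_2_cases_iff)

definition psgn :: "pauli \<Rightarrow> pauli \<Rightarrow> complex" where
  "psgn a b = (if a = PI \<or> b = PI \<or> a = b then 1 else -1)"

lemma pm2_comm: "r < 2 \<Longrightarrow> c < 2 \<Longrightarrow> pm2 a b r c = psgn a b * pm2 b a r c"
  by (cases a; cases b) (auto simp: pm2_def psgn_def less_2_cases_iff)

lemma pauli_sq:
  assumes "length p = m" "i < 2 ^ m" "j < 2 ^ m"
  shows "mat_mult (2 ^ m) (pauli_mat p) (pauli_mat p) i j = (if i = j then 1 else 0)"
proof -
  have "mat_mult (2 ^ m) (pauli_mat p) (pauli_mat p) i j = (\<Prod>l<m. if bt l i = bt l j then 1 else 0)"
    by (simp add: pauli_mult assms pm2_sq)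
  also have "\<dots> = (if i = j then 1 else 0)"
  proof (cases "i = j")
    case True then show ?thesis by simp
  next
    case False
    then obtain l where "l < m" "bt l i \<noteq> bt l j" using bits_eq[OF assms(2,3)] by blast
    then show ?thesis using False by (auto intro!: prod_zero)
  qed
  finally show ?thesis .
qed

lemma pauli_entry_herm: "pauli_entry a c r = cnj (pauli_entry a r c)"
  by (cases a) auto

lemma pauli_herm: "pauli_mat p j i = cnj (pauli_mat p i j)"
  unfolding pauli_mat_def cnj_prod by (rule prod.cong[OF refl], rule pauli_entry_herm)

lemma pauli_comm_sign:
  assumes "length p = m" "length q = m"
  shows "mat_mult (2 ^ m) (pauli_mat p) (pauli_mat q) i j
       = (\<Prod>l<m. psgn (p ! l) (q ! l)) * mat_mult (2 ^ m) (pauli_mat q) (pauli_mat p) i j"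
proof -
  have "(\<Prod>l<m. pm2 (p ! l) (q ! l) (bt l i) (bt l j)) = (\<Prod>l<m. psgn (p ! l) (q ! l) * pm2 (q ! l) (p ! l) (bt l i) (bt l j))"
    by (rule prod.cong[OF refl], rule pm2_comm) auto
  then show ?thesis by (simp add: pauli_mult assms prod.distrib)
qed

definition gpos :: "('a \<Rightarrow> 'a \<Rightarrow> bool) \<Rightarrow> ('a \<Rightarrow> nat) \<Rightarrow> 'a \<Rightarrow> nat \<Rightarrow> nat \<Rightarrow> pauli" where
  "gpos E f v a b = (if a < b \<and> a = f v \<and> (\<exists>w. f w = b \<and> E v w) then PX
     else if a < b \<and> b = f v \<and> (\<exists>w. f w = a \<and> E w v) then PZ else PI)"

lemma psgn_off:
  assumes inj: "inj f" and uv: "u \<noteq> v" and ab: "\<not> (a = min (f u) (f v) \<and> b = max (f u) (f v))"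
  shows "psgn (gpos E f u a b) (gpos E f v a b) = 1"
proof -
  have fuv: "f u \<noteq> f v" using inj uv by (meson injD)
  show ?thesis
    using fuv ab unfolding psgn_def gpos_def by (auto split: if_splits)
qed

lemma psgn_on:
  assumes inj: "inj f" and uv: "u \<noteq> v" and sym: "\<And>x y. E x y \<Longrightarrow> E y x"
  shows "psgn (gpos E f u (min (f u) (f v)) (max (f u) (f v))) (gpos E f v (min (f u) (f v)) (max (f u) (f v)))
    = (if E u v then -1 else 1)"
proof -
  have fuv: "f u \<noteq> f v" using inj uv by (meson injD)
  have fw: "f w = f x \<longleftrightarrow> w = x" for w x using inj by (meson injD)
  consider "f u < f v" | "f v < f u" using fuv by linarith
  then show ?thesis
  proof cases
    case 1
    then show ?thesis unfolding psgn_def gpos_def using fw sym by (auto simp: min_def max_def)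
  next
    case 2
    then show ?thesis unfolding psgn_def gpos_def using fw sym by (auto simp: min_def max_def)
  qed
qed

lemma realization_exists:
  fixes E :: "'a::finite \<Rightarrow> 'a \<Rightarrow> bool"
  assumes sym: "\<And>u v. E u v \<Longrightarrow> E v u"
  shows "\<exists>m S. realization E m S"
proof -
  obtain f :: "'a \<Rightarrow> nat" and n where fn: "f ` UNIV = {i. i < n}" and inj: "inj f"
    using finite_imp_inj_to_nat_seg[of "UNIV :: 'a set"] by auto
  have fl: "f v < n" for v using fn by auto
  define S where "S v = map (\<lambda>k. gpos E f v (k div n) (k mod n)) [0..<n * n]" for v
  have lenS: "length (S v) = n * n" for v by (simp add: S_def)
  have sgn: "(\<Prod>l<n * n. psgn (S u ! l) (S v ! l)) = (if E u v then -1 else 1)" if uv: "u \<noteq> v" for u v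
  proof -
    define l0 where "l0 = min (f u) (f v) * n + max (f u) (f v)"
    have n0: "0 < n" using fl[of u] by simp
    have l0n: "l0 < n * n"
    proof -
      have "min (f u) (f v) * n + max (f u) (f v) < min (f u) (f v) * n + n"
        using fl[of u] fl[of v] by (simp add: max_def)
      also have "\<dots> \<le> n * n"
        using fl[of u] fl[of v] by (metis add.commute less_imp_le_nat min_def mult.commute mult_Suc_right mult_le_mono2 Suc_leI)
      finally show ?thesis by (simp add: l0_def)
    qed
    have l0d: "l0 div n = min (f u) (f v)" "l0 mod n = max (f u) (f v)"
      using fl[of u] fl[of v] n0 by (simp_all add: l0_def max_def)
    have "(\<Prod>l<n * n. psgn (S u ! l) (S v ! l)) = (\<Prod>l<n * n. if l = l0 then (if E u v then -1 else 1) else 1)"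
    proof (rule prod.cong[OF refl])
      fix l assume l: "l \<in> {..<n * n}"
      have Sl: "S w ! l = gpos E f w (l div n) (l mod n)" for w using l by (simp add: S_def)
      show "psgn (S u ! l) (S v ! l) = (if l = l0 then (if E u v then -1 else 1) else 1)"
      proof (cases "l = l0")
        case True
        have "psgn (S u ! l) (S v ! l) = psgn (gpos E f u (l div n) (l mod n)) (gpos E f v (l div n) (l mod n))"
          by (simp only: Sl)
        then show ?thesis using True l0d psgn_on[of f u v E, OF inj uv assms] by simp
      next
        case False
        have "\<not> (l div n = min (f u) (f v) \<and> l mod n = max (f u) (f v))"
        proof
          assume "l div n = min (f u) (f v) \<and> l mod n = max (f u) (f v)"
          then have "l = l0" unfolding l0_def by (metis div_mult_mod_eq mult.commute)
          then show False using False by simp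
        qed
        then show ?thesis using psgn_off[OF inj uv] False by (simp add: Sl)
      qed
    qed
    also have "\<dots> = (if E u v then -1 else 1)" using l0n by (simp add: prod.delta)
    finally show ?thesis .
  qed
  have "realization E (n * n) S"
    unfolding realization_def
  proof (intro conjI allI impI)
    fix v show "length (S v) = n * n" by (rule lenS)
  next
    fix u v assume uv: "u \<noteq> v" and E: "E u v"
    show "mats_anticommute (2 ^ (n * n)) (pauli_mat (S u)) (pauli_mat (S v))"
      unfolding mats_anticommute_def
    proof (intro allI impI)
      fix i j
      have "mat_mult (2 ^ (n * n)) (pauli_mat (S u)) (pauli_mat (S v)) i j
         = (\<Prod>l<n * n. psgn (S u ! l) (S v ! l)) * mat_mult (2 ^ (n * n)) (pauli_mat (S v)) (pauli_mat (S u)) i j"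
        by (rule pauli_comm_sign[OF lenS lenS])
      then show "mat_mult (2 ^ (n * n)) (pauli_mat (S u)) (pauli_mat (S v)) i j
         = - mat_mult (2 ^ (n * n)) (pauli_mat (S v)) (pauli_mat (S u)) i j"
        using sgn[OF uv] E by simp
    qed
  next
    fix u v assume uv: "u \<noteq> v" and E: "\<not> E u v"
    show "mats_commute (2 ^ (n * n)) (pauli_mat (S u)) (pauli_mat (S v))"
      unfolding mats_commute_def
    proof (intro allI impI)
      fix i j
      have "mat_mult (2 ^ (n * n)) (pauli_mat (S u)) (pauli_mat (S v)) i j
         = (\<Prod>l<n * n. psgn (S u ! l) (S v ! l)) * mat_mult (2 ^ (n * n)) (pauli_mat (S v)) (pauli_mat (S u)) i j"
        by (rule pauli_comm_sign[OF lenS lenS])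
      then show "mat_mult (2 ^ (n * n)) (pauli_mat (S u)) (pauli_mat (S v)) i j
         = mat_mult (2 ^ (n * n)) (pauli_mat (S v)) (pauli_mat (S u)) i j"
        using sgn[OF uv] E by simp
    qed
  qed
  then show ?thesis by blast
qed

lemma eye_trunc: "eye d * trunc d A = trunc d A" "trunc d A * eye d = trunc d A"
proof -
  show "eye d * trunc d A = trunc d A"
    unfolding eye_def trunc_mult
  proof (rule trunc_cong)
    fix i j assume ij: "i < d" "j < d"
    have "mat_mult d (\<lambda>i j. if i = j then 1 else 0) A i j = (\<Sum>k<d. if k = i then A i j else 0)"
      unfolding mat_mult_def by (rule sum.cong) auto
    then show "mat_mult d (\<lambda>i j. if i = j then 1 else 0) A i j = A i j" using ij by simp
  qed
  show "trunc d A * eye d = trunc d A"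
    unfolding eye_def trunc_mult
  proof (rule trunc_cong)
    fix i j assume ij: "i < d" "j < d"
    have "mat_mult d A (\<lambda>i j. if i = j then 1 else 0) i j = (\<Sum>k<d. if k = j then A i j else 0)"
      unfolding mat_mult_def by (rule sum.cong) auto
    then show "mat_mult d A (\<lambda>i j. if i = j then 1 else 0) i j = A i j" using ij by simp
  qed
qed

lemma pauli_props:
  assumes "length p = m"
  shows "adjf (trunc (2^m) (pauli_mat p)) = trunc (2^m) (pauli_mat p)"
    "trunc (2^m) (pauli_mat p) * trunc (2^m) (pauli_mat p) = eye (2^m)"
proof -
  show "adjf (trunc (2^m) (pauli_mat p)) = trunc (2^m) (pauli_mat p)"
    unfolding adjf_trunc by (rule trunc_cong) (subst pauli_herm, simp)
  show "trunc (2^m) (pauli_mat p) * trunc (2^m) (pauli_mat p) = eye (2^m)"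
    unfolding trunc_mult eye_def by (rule trunc_cong) (simp add: pauli_sq[OF assms])
qed

lemma comm_trunc: "mats_commute d A B \<Longrightarrow> trunc d A * trunc d B = trunc d B * trunc d A"
  unfolding trunc_mult mats_commute_def by (rule trunc_cong) simp

lemma anti_trunc: "mats_anticommute d A B \<Longrightarrow> trunc d A * trunc d B = - (trunc d B * trunc d A)"
  unfolding trunc_mult mats_anticommute_def trunc_uminus[symmetric] by (rule trunc_cong) simp

lemma chain_nth: "(\<forall>i. Suc i < length xs \<longrightarrow> R (xs ! i) (xs ! Suc i)) \<Longrightarrow> chain R xs"
proof (induction xs)
  case Nil
  show ?case by simp
next
  case (Cons x xs)
  have IH: "chain R xs"
  proof (rule Cons.IH, intro allI impI)
    fix i assume "Suc i < length xs"
    then show "R (xs ! i) (xs ! Suc i)" using Cons.prems[rule_format, of "Suc i"] by simp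
  qed
  show ?case
  proof (cases xs)
    case Nil
    then show ?thesis by simp
  next
    case (Cons y zs)
    then have "R x y" using Cons.prems[rule_format, of 0] by simp
    then show ?thesis using IH \<open>xs = y # zs\<close> by simp
  qed
qed

lemma hull_bound:
  fixes x :: "real ^ 'a::finite"
  assumes "x \<in> convex hull G" "\<And>g. g \<in> G \<Longrightarrow> (\<Sum>i\<in>UNIV. w i * g $ i) \<le> M"
  shows "(\<Sum>i\<in>UNIV. w i * x $ i) \<le> M"
proof -
  define H where "H = {y :: real ^ 'a. inner (\<chi> i. w i) y \<le> M}"
  have "convex H" unfolding H_def by (rule convex_halfspace_le)
  moreover have "G \<subseteq> H" using assms(2) by (auto simp: H_def inner_vec_def)
  ultimately have "convex hull G \<subseteq> H" by (rule hull_minimal[rotated])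
  then show ?thesis using assms(1) by (auto simp: H_def inner_vec_def)
qed

lemma finite_sums_set: "finite {(\<Sum>i\<in>I. w i) | I :: ('a::finite) set. P I}"
proof -
  have "{(\<Sum>i\<in>I. w i) | I :: 'a set. P I} = (\<lambda>I. \<Sum>i\<in>I. w i) ` {I. P I}" by auto
  then show ?thesis by simp
qed

lemma alpha_ge:
  fixes E :: "'a::finite \<Rightarrow> 'a \<Rightarrow> bool"
  assumes "independent_set E I"
  shows "(\<Sum>i\<in>I. w i) \<le> alpha E w"
  unfolding alpha_def by (rule Max_ge[OF finite_sums_set]) (use assms in auto)

lemma alpha_attained:
  fixes E :: "'a::finite \<Rightarrow> 'a \<Rightarrow> bool"
  shows "\<exists>I. independent_set E I \<and> alpha E w = (\<Sum>i\<in>I. w i)"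
proof -
  have ne: "{(\<Sum>i\<in>I. w i) | I. independent_set E I} \<noteq> {}"
    by (rule ex_in_conv[THEN iffD1], rule exI[of _ 0], rule CollectI, rule exI[of _ "{}"])
       (simp add: independent_set_def)
  have "alpha E w \<in> {(\<Sum>i\<in>I. w i) | I. independent_set E I}"
    unfolding alpha_def by (rule Max_in[OF finite_sums_set ne])
  then show ?thesis by auto
qed

lemma trunc_supp:
  assumes "P = eye d * P * eye d"
  shows "d \<le> k \<Longrightarrow> ent P i k = 0" "d \<le> k \<Longrightarrow> ent P k i = 0"
proof -
  assume dk: "d \<le> k"
  have nk: "\<not> k < d" using dk by simp
  have "ent P i k = ent ((eye d * P) * eye d) i k" using assms by simp
  also have "\<dots> = 0"
    by (subst ent_times_any[of _ "bnd (eye d * P)"]) (auto simp: eye_def trunc.rep_eq nk)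
  finally show "ent P i k = 0" .
  have "ent P k i = ent (eye d * (P * eye d)) k i" using assms by (simp add: mult.assoc)
  also have "\<dots> = 0"
    by (subst ent_times_sum_ge[of d]) (auto simp: eye_def trunc.rep_eq nk)
  finally show "ent P k i = 0" .
qed

lemma upper_bound:
  fixes E :: "'a::finite \<Rightarrow> 'a \<Rightarrow> bool"
  assumes hp: "h_perfect E" and R: "realization E m S" and w: "\<forall>i. 0 \<le> w i"
    and dens: "density_matrix (2 ^ m) \<rho>"
  shows "(\<Sum>i\<in>UNIV. w i * (Re (mtrace (2 ^ m) (mat_mult (2 ^ m) \<rho> (pauli_mat (S i))))) ^ 2) \<le> alpha E w"
proof -
  define d where "d = (2::nat) ^ m"
  interpret Q: qs "eye d" adjf "psiR d \<rho>" using qs_density dens d_def by simp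
  define T where "T v = trunc d (pauli_mat (S v))" for v
  define c where "c v = psiR d \<rho> (T v)" for v
  have c_eq: "c v = Re (mtrace (2 ^ m) (mat_mult (2 ^ m) \<rho> (pauli_mat (S v))))" for v
    by (simp add: c_def T_def psiR_trunc d_def)
  have lenS: "length (S v) = m" for v using R by (simp add: realization_def)
  have hiT: "Q.hi (T v)" for v
    using pauli_props[OF lenS] eye_trunc unfolding Q.hi_def unfolding T_def d_def by simp
  have antiT: "Q.anti (T u) (T v)" if "u \<noteq> v" "E u v" for u v
    using R that unfolding realization_def Q.anti_def T_def d_def by (auto intro: anti_trunc)
  have commT: "Q.comm (T u) (T v)" if "\<not> E u v" for u v
  proof (cases "u = v")
    case True then show ?thesis by (simp add: Q.comm_def)
  next
    case False
    then show ?thesis using R that unfolding realization_def Q.comm_def T_def d_def by (auto intro: comm_trunc)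
  qed
  have relT: "Q.comm (T u) (T v) \<or> Q.anti (T u) (T v)" for u v
  proof (cases "u = v")
    case True then show ?thesis by (simp add: Q.comm_def)
  next
    case False then show ?thesis using antiT commT by blast
  qed
  define x where "x = (\<chi> v. (c v)^2)"
  have xin: "x \<in> STAB E"
  proof -
    have "x \<in> {x. (\<forall>i. 0 \<le> x $ i)
       \<and> (\<forall>K. clique E K \<longrightarrow> (\<Sum>i\<in>K. x $ i) \<le> 1)
       \<and> (\<forall>C a. odd_cycle E C a \<longrightarrow> (\<Sum>i\<in>C. x $ i) \<le> real a)}"
    proof (intro CollectI conjI allI impI)
      fix i show "0 \<le> x $ i" by (simp add: x_def)
    next
      fix K assume K: "clique E K"
      have "(\<Sum>i\<in>K. (psiR d \<rho> (T i))^2) \<le> 1"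
        by (rule Q.clique_bound) (use hiT antiT K in \<open>auto simp: clique_def\<close>)
      then show "(\<Sum>i\<in>K. x $ i) \<le> 1" by (simp add: x_def c_def)
    next
      fix C a assume oc: "odd_cycle E C a"
      then obtain vs where a1: "1 \<le> a" and dist: "distinct vs" and len: "length vs = 2 * a + 1"
        and setvs: "set vs = C" and cyc: "\<forall>i < length vs. E (vs ! i) (vs ! ((i + 1) mod length vs))"
        unfolding odd_cycle_def by blast
      define ts where "ts = map T vs"
      have "(\<Sum>t\<leftarrow>ts. (psiR d \<rho> t)^2) \<le> real a"
      proof (rule Q.odd_cycle_bound)
        show "length ts = 2 * a + 1" using len by (simp add: ts_def)
        show "1 \<le> a" by (rule a1)
        show "\<forall>x\<in>set ts. Q.hi x" using hiT by (auto simp: ts_def)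
        show "\<forall>x\<in>set ts. \<forall>y\<in>set ts. Q.comm x y \<or> Q.anti x y"
          using relT by (auto simp: ts_def)
        show "chain Q.anti ts"
        proof (rule chain_nth, intro allI impI)
          fix i assume i: "Suc i < length ts"
          then have i': "Suc i < length vs" by (simp add: ts_def)
          have E1: "E (vs ! i) (vs ! Suc i)" using cyc[rule_format, of i] i' by simp
          have "vs ! i \<noteq> vs ! Suc i" using dist i' by (simp add: nth_eq_iff_index_eq)
          then show "Q.anti (ts ! i) (ts ! Suc i)" using antiT E1 i' by (simp add: ts_def)
        qed
        show "Q.anti (last ts) (hd ts)"
        proof -
          have l0: "0 < length vs" using len by simp
          have E1: "E (vs ! (length vs - 1)) (vs ! 0)"
            using cyc[rule_format, of "length vs - 1"] l0 by simp
          have "length vs - 1 \<noteq> 0" using len a1 by simp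
          then have "vs ! (length vs - 1) \<noteq> vs ! 0" using dist l0 by (simp add: nth_eq_iff_index_eq)
          then have "Q.anti (T (vs ! (length vs - 1))) (T (vs ! 0))" using antiT E1 by simp
          moreover have "last ts = T (vs ! (length vs - 1))" "hd ts = T (vs ! 0)"
            using l0 by (simp_all add: ts_def last_conv_nth hd_conv_nth)
          ultimately show ?thesis by simp
        qed
      qed
      moreover have "(\<Sum>t\<leftarrow>ts. (psiR d \<rho> t)^2) = (\<Sum>i\<in>C. x $ i)"
        by (simp add: ts_def x_def c_def sum_list_distinct_conv_sum_set[OF dist] setvs[symmetric] comp_def)
      ultimately show "(\<Sum>i\<in>C. x $ i) \<le> real a" by simp
    qed
    then show ?thesis using hp by (simp add: h_perfect_def)
  qed
  have "(\<Sum>i\<in>UNIV. w i * x $ i) \<le> alpha E w"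
  proof (rule hull_bound[OF xin[unfolded STAB_def]])
    fix g assume "g \<in> {indep_vec I |I. independent_set E I}"
    then obtain I where I: "independent_set E I" "g = indep_vec I" by blast
    have "(\<Sum>i\<in>UNIV. w i * g $ i) = (\<Sum>i\<in>I. w i)"
      by (simp add: I(2) indep_vec_def if_distrib sum.If_cases)
    also have "\<dots> \<le> alpha E w" by (rule alpha_ge[OF I(1)])
    finally show "(\<Sum>i\<in>UNIV. w i * g $ i) \<le> alpha E w" .
  qed
  then show ?thesis by (simp add: x_def c_eq)
qed

lemma mixed_density:
  assumes d0: "0 < d"
  shows "density_matrix d (\<lambda>i j. if i = j then complex_of_real (1 / real d) else 0)"
  unfolding density_matrix_def
proof (intro conjI allI impI)
  fix i j show "(if i = j then complex_of_real (1 / real d) else 0) = cnj (if j = i then complex_of_real (1 / real d) else 0)"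
    by simp
next
  fix v :: "nat \<Rightarrow> complex"
  have inner: "(\<Sum>j<d. cnj (v i) * (if i = j then complex_of_real (1 / real d) else 0) * v j)
      = complex_of_real ((cmod (v i))^2 / real d)" if "i < d" for i
  proof -
    have "(\<Sum>j<d. cnj (v i) * (if i = j then complex_of_real (1 / real d) else 0) * v j)
        = (\<Sum>j<d. if j = i then cnj (v i) * complex_of_real (1 / real d) * v i else 0)"
      by (rule sum.cong) auto
    also have "\<dots> = cnj (v i) * v i * complex_of_real (1 / real d)" using that by (simp add: mult_ac)
    also have "\<dots> = complex_of_real ((cmod (v i))^2 / real d)"
      by (simp add: complex_norm_square[symmetric] mult.commute)
    finally show ?thesis .
  qed
  have "(\<Sum>i<d. \<Sum>j<d. cnj (v i) * (if i = j then complex_of_real (1 / real d) else 0) * v j)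
      = (\<Sum>i<d. complex_of_real ((cmod (v i))^2 / real d))"
    by (rule sum.cong) (simp_all add: inner)
  then show "0 \<le> Re (\<Sum>i<d. \<Sum>j<d. cnj (v i) * (if i = j then complex_of_real (1 / real d) else 0) * v j)"
    by (simp add: sum_nonneg)
next
  have "mtrace d (\<lambda>i j. if i = j then complex_of_real (1 / real d) else 0) = of_nat d * complex_of_real (1 / real d)"
    by (simp add: mtrace_def)
  then show "mtrace d (\<lambda>i j. if i = j then complex_of_real (1 / real d) else 0) = 1"
    using d0 by (simp add: of_real_def[symmetric])
qed

lemma lower_bound:
  fixes E :: "'a::finite \<Rightarrow> 'a \<Rightarrow> bool"
  assumes R: "realization E m S" and w: "\<forall>i. 0 \<le> w i"
  shows "\<exists>\<rho>. density_matrix (2 ^ m) \<rho> \<and>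
    alpha E w \<le> (\<Sum>i\<in>UNIV. w i * (Re (mtrace (2 ^ m) (mat_mult (2 ^ m) \<rho> (pauli_mat (S i))))) ^ 2)"
proof -
  define d where "d = (2::nat) ^ m"
  have d0: "0 < d" by (simp add: d_def)
  define \<rho>0 where "\<rho>0 = (\<lambda>i j::nat. if i = j then complex_of_real (1 / real d) else 0)"
  have dens0: "density_matrix d \<rho>0" unfolding \<rho>0_def by (rule mixed_density[OF d0])
  interpret Q: qs "eye d" adjf "psiR d \<rho>0" by (rule qs_density[OF dens0])
  define T where "T v = trunc d (pauli_mat (S v))" for v
  have lenS: "length (S v) = m" for v using R by (simp add: realization_def)
  have hiT: "Q.hi (T v)" for v
    using pauli_props[OF lenS] eye_trunc unfolding Q.hi_def unfolding T_def d_def by simp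
  have commT: "Q.comm (T u) (T v)" if "\<not> E u v" for u v
  proof (cases "u = v")
    case True then show ?thesis by (simp add: Q.comm_def)
  next
    case False
    then show ?thesis using R that unfolding realization_def Q.comm_def T_def d_def by (auto intro: comm_trunc)
  qed
  obtain I where I: "independent_set E I" and aI: "alpha E w = (\<Sum>i\<in>I. w i)"
    using alpha_attained by blast
  obtain vs where vs: "set vs = I" using finite_list[of I] by auto
  define ts where "ts = map T vs"
  obtain P where P: "adjf P = P" "P * P = P" "eye d * P = P" "P * eye d = P" "0 < psiR d \<rho>0 P"
     "\<forall>t\<in>set ts. t * P = P \<or> t * P = - P"
    using Q.joint_proj[of ts] hiT commT I vs unfolding independent_set_def ts_def by auto
  have Psupp: "d \<le> k \<Longrightarrow> ent P i k = 0" "d \<le> k \<Longrightarrow> ent P k i = 0" for i k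
    using trunc_supp[of P d] P(3,4) by auto
  have Pherm: "ent P i j = cnj (ent P j i)" for i j
    using P(1) by (metis adjf.rep_eq)
  define trP where "trP = (\<Sum>i<d. ent P i i)"
  have im0: "Im trP = 0"
  proof -
    have "Im (ent P i i) = 0" for i using Pherm[of i i] by (metis cnj.sel(2) equation_minus_iff zero_complex.sel(2) add.inverse_inverse neg_equal_zero)
    then show ?thesis by (simp add: trP_def)
  qed
  have psiP: "psiR d \<rho>0 P = Re trP / real d"
  proof -
    have "(\<Sum>i<d. \<Sum>k<d. \<rho>0 i k * ent P k i) = (\<Sum>i<d. complex_of_real (1 / real d) * ent P i i)"
    proof (rule sum.cong[OF refl])
      fix i assume "i \<in> {..<d}"
      then have "(\<Sum>k<d. \<rho>0 i k * ent P k i) = (\<Sum>k<d. if k = i then complex_of_real (1 / real d) * ent P i i else 0)"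
        by (intro sum.cong) (auto simp: \<rho>0_def)
      then show "(\<Sum>k<d. \<rho>0 i k * ent P k i) = complex_of_real (1 / real d) * ent P i i"
        using \<open>i \<in> {..<d}\<close> by simp
    qed
    then show ?thesis by (simp add: psiR_def trP_def sum_divide_distrib)
  qed
  define D where "D = Re trP"
  have D0: "0 < D" using P(5) psiP d0 by (simp add: D_def zero_less_divide_iff)
  have trD: "trP = complex_of_real D" using im0 by (simp add: D_def complex_eq_iff)
  define \<rho>1 where "\<rho>1 = (\<lambda>i j. ent P i j / complex_of_real D)"
  have dens1: "density_matrix d \<rho>1"
    unfolding density_matrix_def
  proof (intro conjI allI impI)
    fix i j show "\<rho>1 i j = cnj (\<rho>1 j i)" by (simp add: \<rho>1_def Pherm[of i j])
  next
    fix v :: "nat \<Rightarrow> complex"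
    have "(\<Sum>i<d. \<Sum>j<d. cnj (v i) * \<rho>1 i j * v j) = (\<Sum>i<d. \<Sum>j<d. cnj (v i) * ent (adjf P * P) i j * v j) / complex_of_real D"
      by (simp add: \<rho>1_def P(1,2) sum_divide_distrib)
    moreover have "0 \<le> Re (\<Sum>i<d. \<Sum>j<d. cnj (v i) * ent (adjf P * P) i j * v j)" by (rule gram_nonneg)
    ultimately show "0 \<le> Re (\<Sum>i<d. \<Sum>j<d. cnj (v i) * \<rho>1 i j * v j)"
      using D0 by (simp add: Re_divide_of_real)
  next
    show "mtrace d \<rho>1 = 1"
      using D0 trD by (simp add: mtrace_def \<rho>1_def sum_divide_distrib[symmetric] trP_def[symmetric])
  qed
  have cv: "(Re (mtrace d (mat_mult d \<rho>1 (pauli_mat (S v)))))^2 = 1" if "v \<in> I" for v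
  proof -
    have tin: "T v \<in> set ts" using that vs by (simp add: ts_def)
    have PT: "P * T v = P \<or> P * T v = - P"
    proof -
      have adjT: "adjf (T v) = T v" using hiT[of v] by (simp add: Q.hi_def)
      from P(6) tin have "T v * P = P \<or> T v * P = - P" by auto
      then show ?thesis
      proof
        assume "T v * P = P"
        then have "adjf (T v * P) = adjf P" by simp
        then show ?thesis using P(1) adjT by (simp add: Q.adj_mult)
      next
        assume "T v * P = - P"
        then have "adjf (T v * P) = adjf (- P)" by simp
        then show ?thesis using P(1) adjT by (simp add: Q.adj_mult Q.adj_uminus)
      qed
    qed
    have "mtrace d (mat_mult d \<rho>1 (pauli_mat (S v))) = (\<Sum>i<d. ent (P * T v) i i) / complex_of_real D"
    proof -
      have "ent (P * T v) i i = (\<Sum>k<d. ent P i k * pauli_mat (S v) k i)" if "i < d" for i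
        by (subst ent_times_sum_ge[of d]) (auto simp: Psupp T_def trunc.rep_eq that)
      then show ?thesis
        by (simp add: mtrace_def mat_mult_def \<rho>1_def sum_divide_distrib)
    qed
    moreover have "(\<Sum>i<d. ent (P * T v) i i) = trP \<or> (\<Sum>i<d. ent (P * T v) i i) = - trP"
      using PT by (auto simp: trP_def uminus_fm.rep_eq sum_negf)
    ultimately have "mtrace d (mat_mult d \<rho>1 (pauli_mat (S v))) = 1 \<or> mtrace d (mat_mult d \<rho>1 (pauli_mat (S v))) = -1"
      using D0 trD by auto
    then show ?thesis by auto
  qed
  have "alpha E w = (\<Sum>i\<in>I. w i * (Re (mtrace d (mat_mult d \<rho>1 (pauli_mat (S i)))))^2)"
    using aI cv by simp
  also have "\<dots> \<le> (\<Sum>i\<in>UNIV. w i * (Re (mtrace d (mat_mult d \<rho>1 (pauli_mat (S i)))))^2)"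
    by (rule sum_mono2) (use w in auto)
  finally show ?thesis using dens1 by (auto simp: d_def)
qed

theorem theorem2:
  fixes E :: "'a::finite \<Rightarrow> 'a \<Rightarrow> bool"
  assumes "\<And>u v. E u v \<Longrightarrow> E v u"
    and "\<And>v. \<not> E v v"
    and "h_perfect E"
  shows "hbar_perfect E"
proof -
  define mS where "mS = (SOME mS. realization E (fst mS) (snd mS))"
  obtain m0 S0 where "realization E m0 S0" using realization_exists[of E] assms(1) by blast
  then have ex: "\<exists>mS. realization E (fst mS) (snd mS)" by (intro exI[of _ "(m0, S0)"]) simp
  have R: "realization E (fst mS) (snd mS)" unfolding mS_def by (rule someI_ex[OF ex])
  show "hbar_perfect E" unfolding hbar_perfect_def
  proof (intro allI impI)
    fix w :: "'a \<Rightarrow> real" assume w: "\<forall>i. 0 \<le> w i"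
    define f where "f \<rho> = (\<Sum>i\<in>UNIV. w i * (Re (mtrace (2 ^ fst mS) (mat_mult (2 ^ fst mS) \<rho> (pauli_mat (snd mS i))))) ^ 2)" for \<rho>
    define D where "D = {\<rho>. density_matrix (2 ^ fst mS) \<rho>}"
    have beta: "beta E w = (SUP \<rho>\<in>D. f \<rho>)"
      unfolding beta_def f_def D_def mS_def[symmetric] by (simp add: case_prod_beta)
    have up: "f \<rho> \<le> alpha E w" if "\<rho> \<in> D" for \<rho>
      using upper_bound[OF assms(3) R w] that by (simp add: f_def D_def)
    obtain \<rho>1 where r1: "\<rho>1 \<in> D" "alpha E w \<le> f \<rho>1"
      using lower_bound[OF R w] by (auto simp: f_def D_def)
    have bdd: "bdd_above (f ` D)" using up by (intro bdd_aboveI[of _ "alpha E w"]) auto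
    have "(SUP \<rho>\<in>D. f \<rho>) \<le> alpha E w"
      using r1(1) up by (auto intro!: cSUP_least)
    moreover have "alpha E w \<le> (SUP \<rho>\<in>D. f \<rho>)"
      using r1 bdd by (auto intro: cSUP_upper2)
    ultimately show "beta E w = alpha E w" using beta by simp
  qed
qed

end
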